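(* Let $c_1\neq c_2$ be points in $[0,1]$ satisfying $$\frac13-\frac12(c_1+c_2)+c_1c_2=0,$$ and consider the scheme (EQRF2) $$y_{n+1}=e^{\tau A}y_n+\tau\varphi_1(\tau A)\alpha_{0,n}+\Gamma(1+r)\Bigl((t_n+\tau)^{1+r}\varphi_{1+r}\bigl((t_n+\tau)A\bigr)-t_n^{1+r}e^{\tau A}\varphi_{1+r}(t_nA)\Bigr)\alpha_{1,n},$$ $n=0,\dots,N-1$, started from the exact initial value $y_0$, where $$\alpha_{1,n}=\frac{h((t_n+c_2\tau)^r)-h((t_n+c_1\tau)^r)}{(t_n+c_2\tau)^r-(t_n+c_1\tau)^r},\qquad \alpha_{0,n}=h((t_n+c_1\tau)^r)-(t_n+c_1\tau)^r\alpha_{1,n}.$$ Assume $h$ is three times differentiable on $[0,\infty)$ with bounded derivatives $h',h'',h'''$, and that $h''(x)\in\mathcal{D}(A)$ for all $x\ge0$ with $x\mapsto Ah''(x)$ bounded. Then for all $N\in\mathbb{N}$ and $0\le n\le N$, $$\|y(t_n)-y_n\|\le C\tau^{1+2r},$$ where $C$ may depend on $T$ (and on $r,h,c_1,c_2$ and the semigroup) but not on $n$ or $\tau$.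
   Context: $(X,\|\cdot\|)$ is a Banach space and $A:\mathcal{D}(A)\subset X\to X$ is a linear operator generating a strongly continuous semigroup $\{e^{tA}\}_{t\ge0}$ on $X$. Fix $T>0$, $0<r<1$, $y_0\in X$ and $h:[0,\infty)\to X$. The problem is $y'(t)=Ay(t)+h(t^r)$, $y(0)=y_0$, $t\in[0,T]$, with (mild) solution $y(t)=e^{tA}y_0+\int_0^te^{(t-s)A}h(s^r)\,ds$. Time grid: $N\in\mathbb{N}$, $\tau=T/N$, $t_n=n\tau$. For $\lambda>0$ and $t\ge0$ the fractional $\varphi$ function is the bounded operator $\varphi_\lambda(tA)v=\frac{1}{\Gamma(\lambda)}\int_0^1e^{(1-\theta)tA}\theta^{\lambda-1}v\,d\theta$ ($v\in X$), $\Gamma$ being Euler's gamma function; in particular $\tau\varphi_1(\tau A)v=\int_0^\tau e^{(\tau-s)A}v\,ds$. Convention $0^{1+r}=0$. *)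

theory Defs
  imports "HOL-Analysis.Analysis"
begin

definition c0_semigroup :: "(real \<Rightarrow> 'a::banach \<Rightarrow> 'a) \<Rightarrow> bool" where
  "c0_semigroup S \<longleftrightarrow>
     (\<forall>t\<ge>0. bounded_linear (S t)) \<and>
     S 0 = id \<and>
     (\<forall>s t. s \<ge> 0 \<longrightarrow> t \<ge> 0 \<longrightarrow> S (s + t) = S s \<circ> S t) \<and>
     (\<forall>x. continuous_on {0..} (\<lambda>t. S t x))"

definition generates :: "('a::banach \<Rightarrow> 'a) \<Rightarrow> 'a set \<Rightarrow> (real \<Rightarrow> 'a \<Rightarrow> 'a) \<Rightarrow> bool" where
  "generates A D S \<longleftrightarrow> c0_semigroup S \<and>
     D = {x. \<exists>l. ((\<lambda>t. (1 / t) *\<^sub>R (S t x - x)) \<longlongrightarrow> l) (at_right 0)} \<and>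
     (\<forall>x\<in>D. ((\<lambda>t. (1 / t) *\<^sub>R (S t x - x)) \<longlongrightarrow> A x) (at_right 0))"

definition phi :: "(real \<Rightarrow> 'a::banach \<Rightarrow> 'a) \<Rightarrow> real \<Rightarrow> real \<Rightarrow> 'a \<Rightarrow> 'a" where
  "phi S lam t v = (1 / Gamma lam) *\<^sub>R
     integral {0..1} (\<lambda>\<theta>. S ((1 - \<theta>) * t) ((\<theta> powr (lam - 1)) *\<^sub>R v))"

definition mild_sol :: "(real \<Rightarrow> 'a::banach \<Rightarrow> 'a) \<Rightarrow> (real \<Rightarrow> 'a) \<Rightarrow> real \<Rightarrow> 'a \<Rightarrow> real \<Rightarrow> 'a" where
  "mild_sol S h r y0 t = S t y0 + integral {0..t} (\<lambda>s. S (t - s) (h (s powr r)))"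

definition alpha1 :: "(real \<Rightarrow> 'a::banach) \<Rightarrow> real \<Rightarrow> real \<Rightarrow> real \<Rightarrow> real \<Rightarrow> real \<Rightarrow> 'a" where
  "alpha1 h r c1 c2 tau tn =
     (1 / ((tn + c2 * tau) powr r - (tn + c1 * tau) powr r)) *\<^sub>R
       (h ((tn + c2 * tau) powr r) - h ((tn + c1 * tau) powr r))"

definition alpha0 :: "(real \<Rightarrow> 'a::banach) \<Rightarrow> real \<Rightarrow> real \<Rightarrow> real \<Rightarrow> real \<Rightarrow> real \<Rightarrow> 'a" where
  "alpha0 h r c1 c2 tau tn =
     h ((tn + c1 * tau) powr r) - ((tn + c1 * tau) powr r) *\<^sub>R alpha1 h r c1 c2 tau tn"

primrec eqrf2 :: "(real \<Rightarrow> 'a::banach \<Rightarrow> 'a) \<Rightarrow> (real \<Rightarrow> 'a) \<Rightarrow> real \<Rightarrow> real \<Rightarrow> real \<Rightarrow> real \<Rightarrow> 'a \<Rightarrow> nat \<Rightarrow> 'a" where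
  "eqrf2 S h r c1 c2 tau y0 0 = y0"
| "eqrf2 S h r c1 c2 tau y0 (Suc n) =
     (let tn = real n * tau;
          a0 = alpha0 h r c1 c2 tau tn;
          a1 = alpha1 h r c1 c2 tau tn
      in S tau (eqrf2 S h r c1 c2 tau y0 n)
         + tau *\<^sub>R phi S 1 tau a0
         + Gamma (1 + r) *\<^sub>R
             (((tn + tau) powr (1 + r)) *\<^sub>R phi S (1 + r) (tn + tau) a1
              - (tn powr (1 + r)) *\<^sub>R S tau (phi S (1 + r) tn a1)))"

end

theory Submission
  imports Defs
begin

lemma c0_bdd_lin: "c0_semigroup S \<Longrightarrow> t \<ge> 0 \<Longrightarrow> bounded_linear (S t)"
  by (simp add: c0_semigroup_def)

lemma c0_add: "c0_semigroup S \<Longrightarrow> s \<ge> 0 \<Longrightarrow> t \<ge> 0 \<Longrightarrow> S (s + t) x = S s (S t x)"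
  by (simp add: c0_semigroup_def)

lemma c0_zero: "c0_semigroup S \<Longrightarrow> S 0 x = x"
  by (simp add: c0_semigroup_def)

lemma c0_unif_bound:
  fixes S :: "real \<Rightarrow> 'a::banach \<Rightarrow> 'a"
  assumes S: "c0_semigroup S" and L: "L \<ge> 0"
  shows "\<exists>M>0. \<forall>t\<in>{0..L}. \<forall>x. norm (S t x) \<le> M * norm x"
proof -
  define F where "F k = {x. \<forall>t\<in>{0..L}. norm (S t x) \<le> real k}" for k :: nat
  have cont: "continuous_on {0..L} (\<lambda>t. S t x)" for x
    using S unfolding c0_semigroup_def by (meson continuous_on_subset atLeastAtMost_iff atLeast_iff subsetI)
  have clo: "closed (F k)" for k
  proof -
    have "F k = (\<Inter>t\<in>{0..L}. {x. norm (S t x) \<le> real k})" by (auto simp: F_def)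
    moreover have "closed {x. norm (S t x) \<le> real k}" if "t \<in> {0..L}" for t
    proof -
      have "bounded_linear (S t)" using S that by (simp add: c0_semigroup_def)
      then have "continuous_on UNIV (S t)" by (simp add: linear_continuous_on)
      then show ?thesis
        by (intro closed_Collect_le continuous_intros) (auto intro: continuous_on_compose2)
    qed
    ultimately show ?thesis by auto
  qed
  have cover: "(\<Union>k. F k) = UNIV"
  proof (safe)
    fix x
    have "compact ((\<lambda>t. S t x) ` {0..L})" by (intro compact_continuous_image cont) auto
    then obtain B where "\<forall>y\<in>(\<lambda>t. S t x) ` {0..L}. norm y \<le> B"
      using compact_imp_bounded bounded_iff by blast
    moreover obtain k :: nat where "B \<le> real k" using real_arch_simple by blast
    ultimately have "x \<in> F k" by (force simp: F_def)
    then show "x \<in> (\<Union>k. F k)" by blast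
  qed auto
  have "\<exists>k. interior (F k) \<noteq> {}"
  proof (rule ccontr)
    assume "\<not> ?thesis"
    then have "\<And>T. T \<in> range F \<Longrightarrow> closedin euclidean T \<and> euclidean interior_of T = {}"
      using clo by auto
    then have "euclidean interior_of \<Union>(range F) = {}"
      by (intro Baire_category_alt) (auto simp: completely_metrizable_space_euclidean)
    then show False using cover by simp
  qed
  then obtain k x0 where "x0 \<in> interior (F k)" by blast
  then obtain e where e: "e > 0" "ball x0 e \<subseteq> F k" using open_contains_ball by (meson interior_subset open_interior subset_trans)
  define M where "M = 4 * (real k + 1) / e"
  have M: "M > 0" using e by (simp add: M_def)
  have "norm (S t x) \<le> M * norm x" if t: "t \<in> {0..L}" for t x
  proof (cases "x = 0")
    case True
    have "bounded_linear (S t)" using S t by (simp add: c0_semigroup_def)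
    then show ?thesis using True by (simp add: linear_simps)
  next
    case False
    have bl: "bounded_linear (S t)" using S t by (simp add: c0_semigroup_def)
    define y where "y = (e / (2 * norm x)) *\<^sub>R x"
    have ny: "norm y = e / 2" using False e by (simp add: y_def)
    have "x0 + y \<in> F k" "x0 \<in> F k" using e ny by (auto simp: dist_norm intro!: subsetD[OF e(2)])
    then have n1: "norm (S t (x0 + y)) \<le> k" "norm (S t x0) \<le> k" using t by (auto simp: F_def)
    have eq: "S t y = S t (x0 + y) - S t x0" using bl by (simp add: linear_simps)
    have "norm (S t y) \<le> 2 * real k" unfolding eq using n1 norm_triangle_ineq4[of "S t (x0+y)" "S t x0"] by linarith
    moreover have "S t y = (e / (2 * norm x)) *\<^sub>R S t x" using bl by (simp add: y_def linear_simps)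
    ultimately have "(e / (2 * norm x)) * norm (S t x) \<le> 2 * real k" using e by simp
    then have "norm (S t x) \<le> 4 * real k / e * norm x" using e False
      by (simp add: field_simps)
    also have "\<dots> \<le> M * norm x" using e by (auto simp: M_def intro!: mult_right_mono divide_right_mono)
    finally show ?thesis .
  qed
  then show ?thesis using M by blast
qed


lemma c0_cont_comp:
  fixes S :: "real \<Rightarrow> 'a::banach \<Rightarrow> 'a"
  assumes S: "c0_semigroup S" and M: "\<forall>t\<in>{0..L}. \<forall>x. norm (S t x) \<le> M * norm x"
    and g: "continuous_on K g" and f: "continuous_on K f" and gK: "g ` K \<subseteq> {0..L}"
  shows "continuous_on K (\<lambda>s. S (g s) (f s))"
  unfolding continuous_on_def
proof
  fix s0 assume s0: "s0 \<in> K"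
  have c1: "((\<lambda>s. S (g s) (f s0)) \<longlongrightarrow> S (g s0) (f s0)) (at s0 within K)"
  proof -
    have c: "continuous_on {0..} (\<lambda>t. S t (f s0))" using S by (simp add: c0_semigroup_def)
    have "continuous_on K (\<lambda>s. S (g s) (f s0))"
      by (rule continuous_on_compose2[OF c g]) (use gK in auto)
    then show ?thesis using s0 by (simp add: continuous_on_def)
  qed
  have c2: "((\<lambda>s. S (g s) (f s - f s0)) \<longlongrightarrow> 0) (at s0 within K)"
  proof (rule Lim_null_comparison)
    show "\<forall>\<^sub>F s in at s0 within K. norm (S (g s) (f s - f s0)) \<le> M * norm (f s - f s0)"
      unfolding eventually_at_filter by (intro always_eventually) (use gK M in \<open>auto simp: image_subset_iff\<close>)
    have "(f \<longlongrightarrow> f s0) (at s0 within K)" using f s0 by (simp add: continuous_on_def)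
    then have "((\<lambda>s. f s - f s0) \<longlongrightarrow> 0) (at s0 within K)"
      using Lim_null by (simp add: LIM_zero)
    then show "((\<lambda>s. M * norm (f s - f s0)) \<longlongrightarrow> 0) (at s0 within K)"
      using tendsto_mult_right_zero tendsto_norm_zero by blast
  qed
  have "((\<lambda>s. S (g s) (f s0) + S (g s) (f s - f s0)) \<longlongrightarrow> S (g s0) (f s0) + 0) (at s0 within K)"
    by (intro tendsto_add c1 c2)
  moreover have "\<forall>\<^sub>F s in at s0 within K. S (g s) (f s0) + S (g s) (f s - f s0) = S (g s) (f s)"
  proof -
    have "S (g s) (f s0) + S (g s) (f s - f s0) = S (g s) (f s)" if "s \<in> K" for s
    proof -
      have "bounded_linear (S (g s))" using S gK that by (auto simp: c0_semigroup_def)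
      then show ?thesis by (simp add: linear_simps)
    qed
    then show ?thesis by (auto simp: eventually_at_filter)
  qed
  ultimately show "((\<lambda>s. S (g s) (f s)) \<longlongrightarrow> S (g s0) (f s0)) (at s0 within K)"
    by (simp add: tendsto_cong)
qed

lemma gen_deriv:
  fixes S :: "real \<Rightarrow> 'a::banach \<Rightarrow> 'a"
  assumes gen: "generates A D S" and M: "\<forall>t\<in>{0..L}. \<forall>x. norm (S t x) \<le> M * norm x"
    and w: "w \<in> D" and t: "0 < t" "t < L"
  shows "((\<lambda>s. S s w) has_vector_derivative S t (A w)) (at t)"
proof -
  have S: "c0_semigroup S" using gen by (simp add: generates_def)
  define d where "d h = (1 / h) *\<^sub>R (S h w - w)" for h
  have dlim: "(d \<longlongrightarrow> A w) (at_right 0)"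
  proof -
    have "\<forall>x\<in>D. ((\<lambda>t. (1 / t) *\<^sub>R (S t x - x)) \<longlongrightarrow> A x) (at_right 0)"
      using gen unfolding generates_def by blast
    then show ?thesis using w unfolding d_def by blast
  qed
  have bl: "bounded_linear (S t)" using S t by (simp add: c0_semigroup_def)
  have habs: "filterlim (\<lambda>y. \<bar>y - t\<bar>) (at_right 0) (at t)"
    unfolding filterlim_at
  proof
    show "\<forall>\<^sub>F y in at t. \<bar>y - t\<bar> \<in> {0<..} \<and> \<bar>y - t\<bar> \<noteq> 0"
      by (auto simp: eventually_at_filter)
    have "((\<lambda>y. \<bar>y - t\<bar>) \<longlongrightarrow> \<bar>t - t\<bar>) (at t)" by (intro tendsto_intros)
    then show "((\<lambda>y. \<bar>y - t\<bar>) \<longlongrightarrow> 0) (at t)" by simp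
  qed
  have l1: "((\<lambda>y. d \<bar>y - t\<bar>) \<longlongrightarrow> A w) (at t)"
    using filterlim_compose[OF dlim habs] .
  have isc: "isCont (\<lambda>s. S s (A w)) t"
  proof -
    have "continuous_on {0<..} (\<lambda>s. S s (A w))" using S
      by (auto simp: c0_semigroup_def intro: continuous_on_subset)
    then show ?thesis using t by (simp add: continuous_on_eq_continuous_at)
  qed
  have l2: "((\<lambda>y. S (min y t) (A w)) \<longlongrightarrow> S t (A w)) (at t)"
  proof -
    have "((\<lambda>y. min y t) \<longlongrightarrow> min t t) (at t)" by (intro tendsto_intros)
    then show ?thesis using isCont_tendsto_compose[OF isc] by simp
  qed
  define B where "B y = M * norm (d \<bar>y - t\<bar> - A w) + norm (S t (A w) - S (min y t) (A w))" for y
  have Blim: "(B \<longlongrightarrow> 0) (at t)"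
  proof -
    have "((\<lambda>y. d \<bar>y - t\<bar> - A w) \<longlongrightarrow> 0) (at t)" using l1 by (simp add: LIM_zero)
    moreover have "((\<lambda>y. S t (A w) - S (min y t) (A w)) \<longlongrightarrow> 0) (at t)"
      using tendsto_diff[OF tendsto_const l2, of "S t (A w)"] by simp
    ultimately have "((\<lambda>y. M * norm (d \<bar>y - t\<bar> - A w) + norm (S t (A w) - S (min y t) (A w))) \<longlongrightarrow> M * 0 + 0) (at t)"
      by (intro tendsto_add tendsto_mult tendsto_const) (auto intro: tendsto_norm_zero)
    then show ?thesis by (simp add: B_def[abs_def])
  qed
  have ev: "\<forall>\<^sub>F y in at t. y \<in> {0<..<L}"
    using t by (intro eventually_at_in_open') auto
  have bnd: "norm ((S y w - S t w) - (y - t) *\<^sub>R S t (A w)) / norm (y - t) \<le> B y"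
    if y: "y \<in> {0<..<L}" "y \<noteq> t" for y
  proof (cases "y > t")
    case True
    define h where "h = y - t"
    have h: "h > 0" "y = t + h" using True by (auto simp: h_def)
    have e1: "S (t+h) w = S t (S h w)" by (rule c0_add[OF S]) (use h t in auto)
    have e2: "S t (d h - A w) = (1/h) *\<^sub>R (S t (S h w) - S t w) - S t (A w)"
      using bl by (simp add: d_def linear_simps)
    have e3: "h *\<^sub>R ((1/h) *\<^sub>R (S t (S h w) - S t w) - S t (A w)) = (S t (S h w) - S t w) - h *\<^sub>R S t (A w)"
      using h(1) by (simp add: scaleR_diff_right)
    have eqv: "(S (t+h) w - S t w) - ((t+h) - t) *\<^sub>R S t (A w) = h *\<^sub>R S t (d h - A w)"
      using e1 e2 e3 by simp
    have nb: "norm (S t (d h - A w)) \<le> M * norm (d h - A w)" using M t by auto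
    have "norm ((S (t+h) w - S t w) - ((t+h) - t) *\<^sub>R S t (A w)) / norm ((t+h) - t) \<le> M * norm (d h - A w)"
      unfolding eqv using h(1) nb by simp
    moreover have "\<bar>t + h - t\<bar> = h" "min (t+h) t = t" using h by auto
    ultimately show ?thesis unfolding h(2) B_def by simp
  next
    case False
    then have yt: "y < t" using y by simp
    define h where "h = t - y"
    have h: "h > 0" "t = y + h" using yt by (auto simp: h_def)
    have bly: "bounded_linear (S y)" using S y by (simp add: c0_semigroup_def)
    have e1: "S (y+h) w = S y (S h w)" by (rule c0_add[OF S]) (use h y in auto)
    have e2: "S y (A w - d h) = S y (A w) - (1/h) *\<^sub>R (S y (S h w) - S y w)"
      using bly by (simp add: d_def linear_simps)
    have e3: "h *\<^sub>R (S y (A w) - (1/h) *\<^sub>R (S y (S h w) - S y w)) = h *\<^sub>R S y (A w) - (S y (S h w) - S y w)"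
      using h(1) by (simp add: scaleR_diff_right)
    have eqv: "(S y w - S (y+h) w) - (y - (y+h)) *\<^sub>R S (y+h) (A w) = h *\<^sub>R (S y (A w - d h) + (S (y+h) (A w) - S y (A w)))"
      unfolding e1 e2 scaleR_add_right e3 by (simp add: algebra_simps)
    have nb: "norm (S y (A w - d h)) \<le> M * norm (d h - A w)"
      using M y by (simp add: norm_minus_commute)
    have "norm (S y (A w - d h) + (S (y+h) (A w) - S y (A w))) \<le> M * norm (d h - A w) + norm (S (y+h) (A w) - S y (A w))"
      using nb norm_triangle_ineq order_trans by (meson add_right_mono)
    then have "norm ((S y w - S (y+h) w) - (y - (y+h)) *\<^sub>R S (y+h) (A w)) / norm (y - (y+h)) \<le> M * norm (d h - A w) + norm (S (y+h) (A w) - S y (A w))"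
      unfolding eqv using h(1) by simp
    moreover have "\<bar>y - (y + h)\<bar> = h" "min y (y+h) = y" using h by auto
    ultimately show ?thesis unfolding h(2) B_def by simp
  qed
  have "((\<lambda>y. norm ((S y w - S t w) - (y - t) *\<^sub>R S t (A w)) / norm (y - t)) \<longlongrightarrow> 0) (at t)"
  proof (rule Lim_null_comparison)
    show "\<forall>\<^sub>F y in at t. norm (norm ((S y w - S t w) - (y - t) *\<^sub>R S t (A w)) / norm (y - t)) \<le> B y"
    proof -
      have bnd': "norm ((S y w - S t w) - (y - t) *\<^sub>R S t (A w)) / \<bar>y - t\<bar> \<le> B y"
        if "0 < y" "y < L" "y \<noteq> t" for y using bnd[of y] that by simp
      show ?thesis using ev unfolding eventually_at_filter
        by (rule eventually_mono) (auto intro: bnd')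
    qed
  qed (rule Blim)
  then show ?thesis
    unfolding has_vector_derivative_def has_derivative_iff_norm
    by (auto intro: bounded_linear_scaleR_left)
qed


lemma gen_bound:
  fixes S :: "real \<Rightarrow> 'a::banach \<Rightarrow> 'a"
  assumes gen: "generates A D S" and M: "\<forall>t\<in>{0..L}. \<forall>x. norm (S t x) \<le> M * norm x"
    and w: "w \<in> D" and s: "0 \<le> \<sigma>" "\<sigma> < L"
  shows "norm (S \<sigma> w - w) \<le> M * norm (A w) * \<sigma>"
proof (cases "\<sigma> = 0")
  case True
  have S: "c0_semigroup S" using gen by (simp add: generates_def)
  then show ?thesis using True by (simp add: c0_zero)
next
  case False
  then have s0: "0 < \<sigma>" using s by simp
  have S: "c0_semigroup S" using gen by (simp add: generates_def)
  have "norm (S \<sigma> w - S 0 w) \<le> M * norm (A w) * \<sigma> - M * norm (A w) * 0"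
  proof (rule differentiable_bound_general[where f' = "\<lambda>x. S x (A w)" and \<phi>' = "\<lambda>x. M * norm (A w)"])
    show "0 < \<sigma>" by (fact s0)
    show "continuous_on {0..\<sigma>} (\<lambda>t. S t w)" using S
      by (auto simp: c0_semigroup_def intro: continuous_on_subset)
    show "continuous_on {0..\<sigma>} (\<lambda>x. M * norm (A w) * x)" by (intro continuous_intros)
    fix x assume x: "0 < x" "x < \<sigma>"
    show "((\<lambda>t. S t w) has_vector_derivative S x (A w)) (at x)"
      by (rule gen_deriv[OF gen M w]) (use x s in auto)
    show "((\<lambda>x. M * norm (A w) * x) has_vector_derivative M * norm (A w)) (at x)"
      by (auto intro!: derivative_eq_intros simp: has_real_derivative_iff_has_vector_derivative[symmetric])
    show "norm (S x (A w)) \<le> M * norm (A w)" using M x s by auto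
  qed
  then show ?thesis using S by (simp add: c0_zero)
qed


lemma c0_cont:
  fixes S :: "real \<Rightarrow> 'a::banach \<Rightarrow> 'a"
  assumes S: "c0_semigroup S" and g: "continuous_on K g" and f: "continuous_on K f"
    and gK: "g ` K \<subseteq> {0..L}"
  shows "continuous_on K (\<lambda>s. S (g s) (f s))"
proof -
  obtain M where "M > 0" "\<forall>t\<in>{0..max L 0}. \<forall>x. norm (S t x) \<le> M * norm x"
    using c0_unif_bound[OF S, of "max L 0"] by auto
  moreover have "g ` K \<subseteq> {0..max L 0}" using gK by auto
  ultimately show ?thesis using c0_cont_comp[OF S _ g f, of "max L 0" M] by auto
qed

lemma phi_r_integral:
  fixes S :: "real \<Rightarrow> 'a::banach \<Rightarrow> 'a"
  assumes S: "c0_semigroup S" and t: "t \<ge> 0" and r: "r > 0"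
  shows "Gamma (1 + r) *\<^sub>R ((t powr (1+r)) *\<^sub>R phi S (1+r) t v)
         = integral {0..t} (\<lambda>s. S (t - s) ((s powr r) *\<^sub>R v))"
proof (cases "t = 0")
  case True
  then show ?thesis by simp
next
  case False
  then have t0: "t > 0" using t by simp
  define g where "g s = S (t - s) ((s powr r) *\<^sub>R v)" for s
  define I where "I = integral {0..t} g"
  have cg: "continuous_on {0..t} g" unfolding g_def
    by (rule c0_cont[OF S, of _ _ _ t]) (auto intro!: continuous_intros continuous_on_powr' simp: r)
  have gI: "(g has_integral I) {0..t}" unfolding I_def
    using integrable_continuous_real[OF cg] by (simp add: integrable_integral)
  have "((\<lambda>x. g (t *\<^sub>R x + 0)) has_integral (I /\<^sub>R t ^ DIM(real))) (cbox ((0 - 0) /\<^sub>R t) ((t - 0) /\<^sub>R t))"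
    using has_integral_affinity'[of g I 0 t t 0] gI t0 by simp
  then have h1: "((\<lambda>x. g (t * x)) has_integral ((1 / t) *\<^sub>R I)) {0..1}" using t0 by (simp add: divide_inverse_commute)
  have geq: "g (t * x) = (t powr r) *\<^sub>R S ((1 - x) * t) ((x powr r) *\<^sub>R v)" if x: "x \<in> {0..1}" for x
  proof -
    have bl: "bounded_linear (S ((1 - x) * t))" using S x t by (simp add: c0_semigroup_def)
    have "(t * x) powr r = t powr r * x powr r" using x t by (simp add: powr_mult)
    moreover have "t - t * x = (1 - x) * t" by (simp add: algebra_simps)
    ultimately show ?thesis using bl by (simp add: g_def linear_simps)
  qed
  have h2: "((\<lambda>x. (t powr r) *\<^sub>R S ((1 - x) * t) ((x powr r) *\<^sub>R v)) has_integral ((1 / t) *\<^sub>R I)) {0..1}"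
    using h1 by (rule has_integral_eq[rotated]) (simp add: geq)
  have h3: "((\<lambda>x. S ((1 - x) * t) ((x powr r) *\<^sub>R v)) has_integral ((1 / t powr r) *\<^sub>R ((1 / t) *\<^sub>R I))) {0..1}"
    using has_integral_cmul[OF h2, of "1 / t powr r"] t0 by (simp add: scaleR_scaleR)
  have J: "integral {0..1} (\<lambda>x. S ((1 - x) * t) ((x powr (1 + r - 1)) *\<^sub>R v)) = (1 / t powr r) *\<^sub>R ((1 / t) *\<^sub>R I)"
    using h3 by (simp add: integral_unique)
  have G: "Gamma (1 + r) \<noteq> 0" using r by (simp add: Gamma_real_pos[THEN less_imp_neq, symmetric] Gamma_real_pos)
  have "Gamma (1 + r) *\<^sub>R ((t powr (1+r)) *\<^sub>R phi S (1+r) t v) = (t powr (1+r)) *\<^sub>R ((1 / t powr r) *\<^sub>R ((1 / t) *\<^sub>R I))"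
    using G unfolding phi_def J by simp
  also have "\<dots> = I" using t0 by (simp add: powr_add scaleR_scaleR)
  finally show ?thesis unfolding I_def g_def .
qed


lemma phi_1_integral:
  fixes S :: "real \<Rightarrow> 'a::banach \<Rightarrow> 'a"
  assumes S: "c0_semigroup S" and a: "a \<ge> 0" and tau: "tau > 0"
  shows "tau *\<^sub>R phi S 1 tau v = integral {a..a+tau} (\<lambda>s. S (a + tau - s) v)"
proof -
  define g where "g s = S (a + tau - s) v" for s
  define I where "I = integral {a..a+tau} g"
  have cg: "continuous_on {a..a+tau} g" unfolding g_def
    by (rule c0_cont[OF S, of _ _ _ tau]) (auto intro!: continuous_intros)
  have gI: "(g has_integral I) {a..a+tau}" unfolding I_def
    using integrable_continuous_real[OF cg] by (simp add: integrable_integral)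
  have "((\<lambda>x. g (tau *\<^sub>R x + a)) has_integral (I /\<^sub>R tau ^ DIM(real))) (cbox ((a - a) /\<^sub>R tau) ((a + tau - a) /\<^sub>R tau))"
    using has_integral_affinity'[of g I a "a+tau" tau a] gI tau by simp
  then have h1: "((\<lambda>x. g (tau * x + a)) has_integral ((1 / tau) *\<^sub>R I)) {0..1}" using tau by (simp add: divide_inverse_commute)
  have h2: "((\<lambda>x. S ((1 - x) * tau) ((x powr (1 - 1)) *\<^sub>R v)) has_integral ((1 / tau) *\<^sub>R I)) {0..1}"
  proof (rule has_integral_spike_finite[OF _ _ h1])
    show "finite {0::real}" by simp
    fix x assume "x \<in> {0..1} - {0::real}"
    then show "S ((1 - x) * tau) ((x powr (1 - 1)) *\<^sub>R v) = g (tau * x + a)"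
      by (simp add: g_def algebra_simps)
  qed
  have "phi S 1 tau v = (1 / tau) *\<^sub>R I"
    unfolding phi_def using integral_unique[OF h2] by simp
  then show ?thesis using tau unfolding I_def g_def by simp
qed

lemma shift_integral:
  fixes S :: "real \<Rightarrow> 'a::banach \<Rightarrow> 'a"
  assumes S: "c0_semigroup S" and a: "a \<ge> 0" and tau: "tau \<ge> 0" and f: "continuous_on {0..a} f"
  shows "S tau (integral {0..a} (\<lambda>s. S (a - s) (f s))) = integral {0..a} (\<lambda>s. S (a + tau - s) (f s))"
proof -
  have cg: "continuous_on {0..a} (\<lambda>s. S (a - s) (f s))"
    by (rule c0_cont[OF S _ f, of _ a]) (auto intro!: continuous_intros)
  have bl: "bounded_linear (S tau)" using S tau by (simp add: c0_semigroup_def)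
  have "S tau (integral {0..a} (\<lambda>s. S (a - s) (f s))) = integral {0..a} (S tau \<circ> (\<lambda>s. S (a - s) (f s)))"
    using integral_linear[OF integrable_continuous_real[OF cg] bl] by simp
  also have "\<dots> = integral {0..a} (\<lambda>s. S (a + tau - s) (f s))"
  proof (rule integral_cong)
    fix s assume "s \<in> {0..a}"
    then show "(S tau \<circ> (\<lambda>s. S (a - s) (f s))) s = S (a + tau - s) (f s)"
      using c0_add[OF S, of tau "a - s" "f s"] tau by (simp add: algebra_simps)
  qed
  finally show ?thesis .
qed


lemma mild_step:
  fixes S :: "real \<Rightarrow> 'a::banach \<Rightarrow> 'a"
  assumes S: "c0_semigroup S" and a: "a \<ge> 0" and tau: "tau > 0" and r: "r > 0"
    and hc: "continuous_on {0..} h"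
  shows "mild_sol S h r y0 (a + tau) = S tau (mild_sol S h r y0 a)
           + integral {a..a+tau} (\<lambda>s. S (a + tau - s) (h (s powr r)))"
proof -
  have hr: "continuous_on {0..b} (\<lambda>s. h (s powr r))" for b
    by (rule continuous_on_compose2[OF hc]) (auto intro!: continuous_intros continuous_on_powr' simp: r)
  have cg: "continuous_on {0..a+tau} (\<lambda>s. S (a + tau - s) (h (s powr r)))"
    by (rule c0_cont[OF S _ hr, where L="a+tau"]) (auto intro!: continuous_intros)
  have split: "integral {0..a+tau} (\<lambda>s. S (a + tau - s) (h (s powr r)))
      = integral {0..a} (\<lambda>s. S (a + tau - s) (h (s powr r))) + integral {a..a+tau} (\<lambda>s. S (a + tau - s) (h (s powr r)))"
    using Henstock_Kurzweil_Integration.integral_combine[OF a _ integrable_continuous_real[OF cg]] tau by simp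
  have bl: "bounded_linear (S tau)" using S tau by (simp add: c0_semigroup_def)
  have "S tau (mild_sol S h r y0 a) = S tau (S a y0) + S tau (integral {0..a} (\<lambda>s. S (a - s) (h (s powr r))))"
    unfolding mild_sol_def using bl by (simp add: linear_simps)
  also have "\<dots> = S (a + tau) y0 + integral {0..a} (\<lambda>s. S (a + tau - s) (h (s powr r)))"
    using c0_add[OF S, of tau a y0] shift_integral[OF S a _ hr, of tau] tau a by (simp add: add.commute)
  finally show ?thesis unfolding mild_sol_def split by simp
qed

lemma scheme_integral:
  fixes S :: "real \<Rightarrow> 'a::banach \<Rightarrow> 'a"
  assumes S: "c0_semigroup S" and a: "a \<ge> 0" and tau: "tau > 0" and r: "r > 0"
  shows "tau *\<^sub>R phi S 1 tau a0 + Gamma (1 + r) *\<^sub>R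
             (((a + tau) powr (1 + r)) *\<^sub>R phi S (1 + r) (a + tau) a1
              - (a powr (1 + r)) *\<^sub>R S tau (phi S (1 + r) a a1))
         = integral {a..a+tau} (\<lambda>s. S (a + tau - s) (a0 + (s powr r) *\<^sub>R a1))"
proof -
  have pr: "continuous_on {0..b} (\<lambda>s. (s powr r) *\<^sub>R a1)" for b
    by (auto intro!: continuous_intros continuous_on_powr' simp: r)
  have cg: "continuous_on {0..a+tau} (\<lambda>s. S (a + tau - s) ((s powr r) *\<^sub>R a1))"
    by (rule c0_cont[OF S _ pr, where L="a+tau"]) (auto intro!: continuous_intros)
  have cg0: "continuous_on {a..a+tau} (\<lambda>s. S (a + tau - s) a0)"
    by (rule c0_cont[OF S, where L="tau"]) (auto intro!: continuous_intros)
  have cg1: "continuous_on {a..a+tau} (\<lambda>s. S (a + tau - s) ((s powr r) *\<^sub>R a1))"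
    using cg by (rule continuous_on_subset) (use a in auto)
  have bl: "bounded_linear (S tau)" using S tau by (simp add: c0_semigroup_def)
  have X: "Gamma (1 + r) *\<^sub>R (((a + tau) powr (1 + r)) *\<^sub>R phi S (1 + r) (a + tau) a1)
      = integral {0..a+tau} (\<lambda>s. S (a + tau - s) ((s powr r) *\<^sub>R a1))"
    using phi_r_integral[OF S _ r, of "a+tau" a1] a tau by simp
  have "Gamma (1 + r) *\<^sub>R ((a powr (1 + r)) *\<^sub>R S tau (phi S (1 + r) a a1))
       = S tau (Gamma (1 + r) *\<^sub>R ((a powr (1 + r)) *\<^sub>R phi S (1 + r) a a1))"
    using bl by (simp add: linear_simps)
  also have "\<dots> = S tau (integral {0..a} (\<lambda>s. S (a - s) ((s powr r) *\<^sub>R a1)))"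
    using phi_r_integral[OF S a r, of a1] by simp
  also have "\<dots> = integral {0..a} (\<lambda>s. S (a + tau - s) ((s powr r) *\<^sub>R a1))"
    by (rule shift_integral[OF S a _ pr]) (use tau in simp)
  finally have Y: "Gamma (1 + r) *\<^sub>R ((a powr (1 + r)) *\<^sub>R S tau (phi S (1 + r) a a1))
     = integral {0..a} (\<lambda>s. S (a + tau - s) ((s powr r) *\<^sub>R a1))" .
  have split: "integral {0..a+tau} (\<lambda>s. S (a + tau - s) ((s powr r) *\<^sub>R a1))
      = integral {0..a} (\<lambda>s. S (a + tau - s) ((s powr r) *\<^sub>R a1)) + integral {a..a+tau} (\<lambda>s. S (a + tau - s) ((s powr r) *\<^sub>R a1))"
    using Henstock_Kurzweil_Integration.integral_combine[OF a _ integrable_continuous_real[OF cg]] tau by simp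
  have Z: "tau *\<^sub>R phi S 1 tau a0 = integral {a..a+tau} (\<lambda>s. S (a + tau - s) a0)"
    by (rule phi_1_integral[OF S a tau])
  have lin: "integral {a..a+tau} (\<lambda>s. S (a + tau - s) (a0 + (s powr r) *\<^sub>R a1))
      = integral {a..a+tau} (\<lambda>s. S (a + tau - s) a0 + S (a + tau - s) ((s powr r) *\<^sub>R a1))"
  proof (rule integral_cong)
    fix s assume "s \<in> {a..a+tau}"
    then have "bounded_linear (S (a + tau - s))" using S by (simp add: c0_semigroup_def)
    then show "S (a + tau - s) (a0 + (s powr r) *\<^sub>R a1) = S (a + tau - s) a0 + S (a + tau - s) ((s powr r) *\<^sub>R a1)"
      by (simp add: linear_simps)
  qed
  also have "\<dots> = integral {a..a+tau} (\<lambda>s. S (a + tau - s) a0) + integral {a..a+tau} (\<lambda>s. S (a + tau - s) ((s powr r) *\<^sub>R a1))"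
    by (rule integral_add[OF integrable_continuous_real[OF cg0] integrable_continuous_real[OF cg1]])
  finally show ?thesis
    unfolding scaleR_diff_right X Y Z split by simp
qed


lemma mvt_vec:
  fixes f f' :: "real \<Rightarrow> 'a::real_normed_vector"
  assumes d: "\<And>x. x \<in> {p..q} \<Longrightarrow> (f has_vector_derivative f' x) (at x within {p..q})"
    and B: "\<And>x. x \<in> {p..q} \<Longrightarrow> norm (f' x) \<le> B"
    and x: "x \<in> {p..q}" and y: "y \<in> {p..q}"
  shows "norm (f x - f y) \<le> B * \<bar>x - y\<bar>"
proof -
  have "norm (f x - f y) \<le> B * norm (x - y)"
  proof (rule differentiable_bound[where f' = "\<lambda>x h. h *\<^sub>R f' x"])
    show "convex {p..q}" by simp
    fix z assume z: "z \<in> {p..q}"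
    show "(f has_derivative (\<lambda>h. h *\<^sub>R f' z)) (at z within {p..q})"
      using d[OF z] by (simp add: has_vector_derivative_def)
    have "onorm (\<lambda>h. h *\<^sub>R f' z) = onorm (\<lambda>h::real. h) * norm (f' z)"
      by (rule onorm_scaleR_left) (rule bounded_linear_ident)
    also have "\<dots> = norm (f' z)" by (simp add: onorm_id)
    finally show "onorm (\<lambda>h. h *\<^sub>R f' z) \<le> B" using B[OF z] by simp
  qed (use x y in auto)
  then show ?thesis by simp
qed

lemma taylor1_bound:
  fixes f f1 f2 :: "real \<Rightarrow> 'a::real_normed_vector"
  assumes d1: "\<And>x. x \<ge> 0 \<Longrightarrow> (f has_vector_derivative f1 x) (at x within {0..})"
    and d2: "\<And>x. x \<ge> 0 \<Longrightarrow> (f1 has_vector_derivative f2 x) (at x within {0..})"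
    and K: "\<And>x. x \<ge> 0 \<Longrightarrow> norm (f2 x) \<le> K"
    and p: "p \<ge> 0" and u: "u \<in> {p..p+\<Delta>}"
  shows "norm (f u - f p - (u - p) *\<^sub>R f1 p) \<le> K * \<Delta>^2"
proof -
  have D: "\<Delta> \<ge> 0" using u by simp
  have K0: "K \<ge> 0" using K[of 0] norm_ge_zero order_trans by blast
  have sub: "{p..p+\<Delta>} \<subseteq> {0..}" using p by auto
  have b1: "norm (f1 x - f1 p) \<le> K * \<Delta>" if x: "x \<in> {p..p+\<Delta>}" for x
  proof -
    have "norm (f1 x - f1 p) \<le> K * \<bar>x - p\<bar>"
      by (rule mvt_vec[where f' = f2 and p = p and q = "p+\<Delta>"])
         (use x p in \<open>auto intro: has_vector_derivative_within_subset[OF d2 sub] K\<close>)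
    also have "\<dots> \<le> K * \<Delta>" using x K0 by (intro mult_left_mono) auto
    finally show ?thesis .
  qed
  define g where "g x = f x - f p - (x - p) *\<^sub>R f1 p" for x
  have "norm (g u - g p) \<le> (K * \<Delta>) * \<bar>u - p\<bar>"
  proof (rule mvt_vec[where f' = "\<lambda>x. f1 x - f1 p" and p = p and q = "p+\<Delta>"])
    fix x assume x: "x \<in> {p..p+\<Delta>}"
    have "(f has_vector_derivative f1 x) (at x within {p..p+\<Delta>})"
      using has_vector_derivative_within_subset[OF d1 sub] x p by auto
    then show "(g has_vector_derivative f1 x - f1 p) (at x within {p..p+\<Delta>})"
      unfolding g_def by (auto intro!: derivative_eq_intros)
    show "norm (f1 x - f1 p) \<le> K * \<Delta>" by (rule b1[OF x])
  qed (use u in auto)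
  also have "\<dots> \<le> (K * \<Delta>) * \<Delta>" using u K0 D by (intro mult_left_mono) auto
  finally show ?thesis by (simp add: g_def power2_eq_square mult.assoc)
qed

lemma taylor2_bound:
  fixes f f1 f2 f3 :: "real \<Rightarrow> 'a::real_normed_vector"
  assumes d1: "\<And>x. x \<ge> 0 \<Longrightarrow> (f has_vector_derivative f1 x) (at x within {0..})"
    and d2: "\<And>x. x \<ge> 0 \<Longrightarrow> (f1 has_vector_derivative f2 x) (at x within {0..})"
    and d3: "\<And>x. x \<ge> 0 \<Longrightarrow> (f2 has_vector_derivative f3 x) (at x within {0..})"
    and K: "\<And>x. x \<ge> 0 \<Longrightarrow> norm (f3 x) \<le> K"
    and p: "p \<ge> 0" and u: "u \<in> {p..p+\<Delta>}"
  shows "norm (f u - f p - (u - p) *\<^sub>R f1 p - ((u - p)^2 / 2) *\<^sub>R f2 p) \<le> K * \<Delta>^3"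
proof -
  have D: "\<Delta> \<ge> 0" using u by simp
  have K0: "K \<ge> 0" using K[of 0] norm_ge_zero order_trans by blast
  have sub: "{p..p+\<Delta>} \<subseteq> {0..}" using p by auto
  define g where "g x = f x - f p - (x - p) *\<^sub>R f1 p - ((x - p)^2 / 2) *\<^sub>R f2 p" for x
  have "norm (g u - g p) \<le> (K * \<Delta>^2) * \<bar>u - p\<bar>"
  proof (rule mvt_vec[where f' = "\<lambda>x. f1 x - f1 p - (x - p) *\<^sub>R f2 p" and p = p and q = "p+\<Delta>"])
    fix x assume x: "x \<in> {p..p+\<Delta>}"
    have "(f has_vector_derivative f1 x) (at x within {p..p+\<Delta>})"
      using has_vector_derivative_within_subset[OF d1 sub] x p by auto
    then show "(g has_vector_derivative f1 x - f1 p - (x - p) *\<^sub>R f2 p) (at x within {p..p+\<Delta>})"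
      unfolding g_def
    proof (auto intro!: derivative_eq_intros simp: algebra_simps)
      have "x = p + (x * 4 - p * 4) / 4" by (simp add: field_simps)
      then have "x *\<^sub>R f2 p = (p + (x * 4 - p * 4) / 4) *\<^sub>R f2 p" by metis
      then show "x *\<^sub>R f2 p = p *\<^sub>R f2 p + ((x * 4 - p * 4) / 4) *\<^sub>R f2 p"
        by (simp only: scaleR_add_left)
    qed
    show "norm (f1 x - f1 p - (x - p) *\<^sub>R f2 p) \<le> K * \<Delta>^2"
      by (rule taylor1_bound[OF d2 d3 K p x])
  qed (use u in auto)
  also have "\<dots> \<le> (K * \<Delta>^2) * \<Delta>" using u K0 D by (intro mult_left_mono) auto
  finally show ?thesis by (simp add: g_def power3_eq_cube power2_eq_square mult.assoc)
qed


definition ip :: "(real \<Rightarrow> 'a::real_normed_vector) \<Rightarrow> real \<Rightarrow> real \<Rightarrow> real \<Rightarrow> 'a" where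
  "ip g u1 u2 u = g u - g u1 - ((u - u1) / (u2 - u1)) *\<^sub>R (g u2 - g u1)"

lemma ip_alpha:
  "h u - (alpha0 h r c1 c2 tau a + u *\<^sub>R alpha1 h r c1 c2 tau a)
   = ip h ((a + c1 * tau) powr r) ((a + c2 * tau) powr r) u"
  unfolding ip_def alpha0_def alpha1_def
  by (simp add: algebra_simps divide_inverse)

lemma ip_quad:
  fixes h :: "real \<Rightarrow> 'a::real_normed_vector"
  assumes ne: "u1 \<noteq> u2"
  shows "ip h u1 u2 u = ip (\<lambda>x. h x - c0 - (x - p) *\<^sub>R v1 - ((x - p)^2 / 2) *\<^sub>R v2) u1 u2 u
            + ((u - u1) * (u - u2) / 2) *\<^sub>R v2"
proof -
  define \<alpha> where "\<alpha> = (u - u1) / (u2 - u1)"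
  have a: "\<alpha> * (u2 - u1) = u - u1" using ne by (simp add: \<alpha>_def)
  define Q where "Q x = c0 + (x - p) *\<^sub>R v1 + ((x - p)^2 / 2) *\<^sub>R v2" for x
  have q: "Q u - Q u1 - \<alpha> *\<^sub>R (Q u2 - Q u1)
      = (u - u1 - \<alpha> * (u2 - u1)) *\<^sub>R v1 + (((u - p)^2 - (u1 - p)^2 - \<alpha> * ((u2 - p)^2 - (u1 - p)^2)) / 2) *\<^sub>R v2"
    unfolding Q_def
    by (simp add: algebra_simps scaleR_diff_left scaleR_add_left diff_divide_distrib)
       (simp only: scaleR_add_left[symmetric] scaleR_cancel_right, simp add: field_simps)
  have c1: "u - u1 - \<alpha> * (u2 - u1) = 0" using a by simp
  have c2: "((u - p)^2 - (u1 - p)^2 - \<alpha> * ((u2 - p)^2 - (u1 - p)^2)) / 2 = (u - u1) * (u - u2) / 2"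
  proof -
    have uu: "u = u1 + \<alpha> * (u2 - u1)" using a by simp
    show ?thesis by (simp add: uu algebra_simps power2_eq_square)
  qed
  have "ip h u1 u2 u = ip (\<lambda>x. h x - Q x) u1 u2 u + (Q u - Q u1 - \<alpha> *\<^sub>R (Q u2 - Q u1))"
    unfolding ip_def \<alpha>_def by (simp add: algebra_simps)
  also have "\<dots> = ip (\<lambda>x. h x - Q x) u1 u2 u + ((u - u1) * (u - u2) / 2) *\<^sub>R v2"
    unfolding q c1 c2 by simp
  finally show ?thesis by (simp add: Q_def algebra_simps)
qed

lemma ip_bound:
  fixes g :: "real \<Rightarrow> 'a::real_normed_vector"
  assumes ne: "u1 \<noteq> u2" and B: "norm (g u) \<le> B" "norm (g u1) \<le> B" "norm (g u2) \<le> B"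
    and rho: "\<bar>u - u1\<bar> \<le> \<rho> * \<bar>u2 - u1\<bar>"
  shows "norm (ip g u1 u2 u) \<le> (2 + 2 * \<rho>) * B"
proof -
  have r0: "\<bar>u - u1\<bar> / \<bar>u2 - u1\<bar> \<le> \<rho>" using rho ne by (simp add: divide_le_eq)
  have B0: "B \<ge> 0" using B(1) norm_ge_zero order_trans by blast
  have "norm (ip g u1 u2 u) \<le> norm (g u) + norm (g u1) + norm (((u - u1) / (u2 - u1)) *\<^sub>R (g u2 - g u1))"
    unfolding ip_def
    using norm_triangle_ineq4[of "g u - g u1" "((u - u1) / (u2 - u1)) *\<^sub>R (g u2 - g u1)"]
      norm_triangle_ineq4[of "g u" "g u1"] by linarith
  also have "norm (((u - u1) / (u2 - u1)) *\<^sub>R (g u2 - g u1)) \<le> \<rho> * (2 * B)"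
  proof -
    have "norm (((u - u1) / (u2 - u1)) *\<^sub>R (g u2 - g u1)) = (\<bar>u - u1\<bar> / \<bar>u2 - u1\<bar>) * norm (g u2 - g u1)"
      by (simp add: abs_divide)
    also have "\<dots> \<le> \<rho> * (2 * B)"
    proof (rule mult_mono)
      show "norm (g u2 - g u1) \<le> 2 * B" using B norm_triangle_ineq4[of "g u2" "g u1"] by linarith
      show "0 \<le> \<rho>" using r0 by (meson abs_ge_zero divide_nonneg_nonneg order_trans)
    qed (use r0 in auto)
    finally show ?thesis .
  qed
  finally show ?thesis using B by (simp add: algebra_simps)
qed


lemma powr_mono2_neg: "p \<le> 0 \<Longrightarrow> 0 < x \<Longrightarrow> x \<le> y \<Longrightarrow> y powr p \<le> x powr p"
  for x y p :: real
  by (cases "p = 0 \<or> x = y") (auto intro: less_imp_le[OF powr_less_mono2_neg])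

lemma powr_mvt:
  fixes x y p :: real
  assumes "0 < x" "x \<le> y"
  shows "\<exists>\<xi>. x \<le> \<xi> \<and> \<xi> \<le> y \<and> y powr p - x powr p = p * \<xi> powr (p - 1) * (y - x)"
proof (cases "x = y")
  case True then show ?thesis by (intro exI[of _ x]) auto
next
  case False
  then have xy: "x < y" using assms by simp
  have "\<exists>z. x < z \<and> z < y \<and> y powr p - x powr p = (y - x) * (p * z powr (p - 1))"
    by (rule MVT2[OF xy]) (use assms in \<open>auto intro: has_real_derivative_powr\<close>)
  then obtain z where z: "x < z" "z < y" "y powr p - x powr p = (y - x) * (p * z powr (p - 1))" by blast
  show ?thesis by (rule exI[of _ z]) (use z in \<open>auto simp: algebra_simps\<close>)
qed

lemma powr_conc_upper:
  fixes x y r :: real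
  assumes "0 < x" "x \<le> y" "0 < r" "r \<le> 1"
  shows "y powr r - x powr r \<le> r * x powr (r - 1) * (y - x)"
proof -
  obtain \<xi> where \<xi>: "x \<le> \<xi>" "\<xi> \<le> y" "y powr r - x powr r = r * \<xi> powr (r - 1) * (y - x)"
    using powr_mvt[OF assms(1,2)] by blast
  have "\<xi> powr (r - 1) \<le> x powr (r - 1)" using powr_mono2_neg[of "r - 1" x \<xi>] assms \<xi> by simp
  then show ?thesis unfolding \<xi>(3) using assms by (intro mult_right_mono mult_left_mono) auto
qed

lemma powr_conc_lower:
  fixes x y r :: real
  assumes "0 < x" "x \<le> y" "0 < r" "r \<le> 1"
  shows "r * y powr (r - 1) * (y - x) \<le> y powr r - x powr r"
proof -
  obtain \<xi> where \<xi>: "x \<le> \<xi>" "\<xi> \<le> y" "y powr r - x powr r = r * \<xi> powr (r - 1) * (y - x)"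
    using powr_mvt[OF assms(1,2)] by blast
  have "y powr (r - 1) \<le> \<xi> powr (r - 1)" using powr_mono2_neg[of "r - 1" \<xi> y] assms \<xi> by simp
  then show ?thesis unfolding \<xi>(3) using assms by (intro mult_right_mono mult_left_mono) auto
qed

lemma powr_neg_diff:
  fixes x y r :: real
  assumes "0 < x" "x \<le> y" "0 < r" "r \<le> 1"
  shows "x powr (r - 1) - y powr (r - 1) \<le> (1 - r) * x powr (r - 2) * (y - x)"
proof -
  obtain \<xi> where \<xi>: "x \<le> \<xi>" "\<xi> \<le> y" "y powr (r - 1) - x powr (r - 1) = (r - 1) * \<xi> powr (r - 1 - 1) * (y - x)"
    using powr_mvt[OF assms(1,2)] by blast
  have "\<xi> powr (r - 2) \<le> x powr (r - 2)" using powr_mono2_neg[of "r - 2" x \<xi>] assms \<xi> by simp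
  then have "(1 - r) * \<xi> powr (r - 2) * (y - x) \<le> (1 - r) * x powr (r - 2) * (y - x)"
    using assms by (intro mult_right_mono mult_left_mono) auto
  moreover have "x powr (r - 1) - y powr (r - 1) = (1 - r) * \<xi> powr (r - 2) * (y - x)"
    using \<xi>(3) by (simp add: algebra_simps)
  ultimately show ?thesis by simp
qed

lemma powr_rem_bound:
  fixes a s r tau :: real
  assumes a: "0 < a" and s: "a \<le> s" "s \<le> a + tau" and r: "0 < r" "r < 1"
  shows "\<bar>s powr r - a powr r - r * a powr (r - 1) * (s - a)\<bar> \<le> a powr (r - 2) * tau^2"
proof -
  have up: "s powr r - a powr r - r * a powr (r - 1) * (s - a) \<le> 0"
    using powr_conc_upper[of a s r] a s r by simp
  have "r * s powr (r - 1) * (s - a) \<le> s powr r - a powr r"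
    using powr_conc_lower[of a s r] a s r by simp
  moreover have "a powr (r - 1) - s powr (r - 1) \<le> (1 - r) * a powr (r - 2) * (s - a)"
    using powr_neg_diff[of a s r] a s r by simp
  ultimately have "s powr r - a powr r - r * a powr (r - 1) * (s - a) \<ge> - (r * (s - a) * ((1 - r) * a powr (r - 2) * (s - a)))"
  proof -
    assume h1: "r * s powr (r - 1) * (s - a) \<le> s powr r - a powr r"
      and h2: "a powr (r - 1) - s powr (r - 1) \<le> (1 - r) * a powr (r - 2) * (s - a)"
    have "r * (s - a) * (a powr (r - 1) - s powr (r - 1)) \<le> r * (s - a) * ((1 - r) * a powr (r - 2) * (s - a))"
      using h2 r s by (intro mult_left_mono) auto
    then show ?thesis using h1 by (simp add: algebra_simps)
  qed
  moreover have "r * (s - a) * ((1 - r) * a powr (r - 2) * (s - a)) \<le> a powr (r - 2) * tau^2"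
  proof -
    have "r * (1 - r) \<le> r * 1" using r by (intro mult_left_mono) auto
    then have "r * (1 - r) \<le> 1" using r by linarith
    have "r * (s - a) * ((1 - r) * a powr (r - 2) * (s - a)) = (r * (1 - r)) * (a powr (r - 2) * (s - a)^2)"
      by (simp add: power2_eq_square algebra_simps)
    also have "\<dots> \<le> 1 * (a powr (r - 2) * (s - a)^2)"
      using \<open>r * (1 - r) \<le> 1\<close> by (intro mult_right_mono) auto
    also have "\<dots> \<le> a powr (r - 2) * tau^2"
    proof -
      have "(s - a)^2 \<le> tau^2" using s by (intro power_mono) auto
      then show ?thesis by (simp add: mult_left_mono)
    qed
    finally show ?thesis .
  qed
  ultimately show ?thesis using up by linarith
qed


lemma qP_alg:
  fixes D e1 e2 \<epsilon> th c1 c2 :: real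
  assumes "\<bar>th - c1\<bar> \<le> 1" "\<bar>th - c2\<bar> \<le> 1" "\<bar>e1\<bar> \<le> 2 * \<epsilon>" "\<bar>e2\<bar> \<le> 2 * \<epsilon>" "D \<ge> 0"
  shows "\<bar>(D * (th - c1) + e1) * (D * (th - c2) + e2) - D^2 * ((th - c1) * (th - c2))\<bar> \<le> 4 * D * \<epsilon> + 4 * \<epsilon>^2"
proof -
  have eq: "(D * (th - c1) + e1) * (D * (th - c2) + e2) - D^2 * ((th - c1) * (th - c2))
      = D * (th - c1) * e2 + D * (th - c2) * e1 + e1 * e2"
    by (simp add: algebra_simps power2_eq_square)
  have b1: "\<bar>D * (th - c1) * e2\<bar> \<le> D * 1 * (2 * \<epsilon>)"
    unfolding abs_mult using assms by (intro mult_mono) auto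
  have b2: "\<bar>D * (th - c2) * e1\<bar> \<le> D * 1 * (2 * \<epsilon>)"
    unfolding abs_mult using assms by (intro mult_mono) auto
  have b3: "\<bar>e1 * e2\<bar> \<le> (2 * \<epsilon>) * (2 * \<epsilon>)"
    unfolding abs_mult using assms by (intro mult_mono) auto
  show ?thesis unfolding eq using b1 b2 b3 abs_triangle_ineq[of "D * (th - c1) * e2 + D * (th - c2) * e1" "e1 * e2"]
    abs_triangle_ineq[of "D * (th - c1) * e2" "D * (th - c2) * e1"]
    by (simp add: power2_eq_square)
qed

lemma qP_bound:
  fixes a tau r c1 c2 s :: real
  assumes a: "0 < a" and tau: "0 < tau" "tau \<le> a" and r: "0 < r" "r < 1"
    and c: "c1 \<in> {0..1}" "c2 \<in> {0..1}" and s: "a \<le> s" "s \<le> a + tau"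
  shows "\<bar>(s powr r - (a + c1 * tau) powr r) * (s powr r - (a + c2 * tau) powr r)
          - (r * a powr (r - 1) * tau)^2 * (((s - a) / tau - c1) * ((s - a) / tau - c2))\<bar>
         \<le> 8 * (a powr (r - 1) * a powr (r - 2) * tau^3)"
proof -
  define D where "D = r * a powr (r - 1) * tau"
  define \<epsilon> where "\<epsilon> = a powr (r - 2) * tau^2"
  define R where "R x = x powr r - a powr r - r * a powr (r - 1) * (x - a)" for x
  have Rb: "\<bar>R x\<bar> \<le> \<epsilon>" if "a \<le> x" "x \<le> a + tau" for x
    unfolding R_def \<epsilon>_def by (rule powr_rem_bound) (use that a r in auto)
  define th where "th = (s - a) / tau"
  have th: "0 \<le> th" "th \<le> 1" using s tau by (auto simp: th_def)
  have sth: "s - a = tau * th" using tau by (simp add: th_def)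
  have dec: "s powr r - (a + ci * tau) powr r = D * (th - ci) + (R s - R (a + ci * tau))" for ci
    unfolding R_def D_def using sth by (simp add: algebra_simps)
  have ei: "\<bar>R s - R (a + ci * tau)\<bar> \<le> 2 * \<epsilon>" if "ci \<in> {0..1}" for ci
  proof -
    have "a + ci * tau \<le> a + tau" using that tau by (simp add: mult_left_le_one_le)
    then have "\<bar>R (a + ci * tau)\<bar> \<le> \<epsilon>" using that tau by (intro Rb) auto
    moreover have "\<bar>R s\<bar> \<le> \<epsilon>" using s by (intro Rb) auto
    ultimately show ?thesis by linarith
  qed
  have D0: "D \<ge> 0" using r tau by (simp add: D_def)
  have main: "\<bar>(D * (th - c1) + (R s - R (a + c1 * tau))) * (D * (th - c2) + (R s - R (a + c2 * tau))) - D^2 * ((th - c1) * (th - c2))\<bar>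
      \<le> 4 * D * \<epsilon> + 4 * \<epsilon>^2"
    by (rule qP_alg) (use th c ei D0 in auto)
  have p1: "a powr (r - 2) * a = a powr (r - 1)"
  proof -
    have "a powr (r - 1) = a powr ((r - 2) + 1)" by simp
    also have "\<dots> = a powr (r - 2) * a powr 1" by (rule powr_add)
    finally show ?thesis using a by simp
  qed
  have Dle: "D \<le> a powr (r - 1) * tau" unfolding D_def using r tau
    by (intro mult_right_mono) (auto intro: mult_left_le_one_le)
  have "D * \<epsilon> \<le> a powr (r - 1) * tau * \<epsilon>" using Dle by (intro mult_right_mono) (auto simp: \<epsilon>_def)
  also have "\<dots> = a powr (r - 1) * a powr (r - 2) * tau^3" by (simp add: \<epsilon>_def power2_eq_square power3_eq_cube)
  finally have t1: "D * \<epsilon> \<le> a powr (r - 1) * a powr (r - 2) * tau^3" .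
  have "\<epsilon>^2 = (a powr (r - 2) * tau) * (a powr (r - 2) * tau^3)" by (simp add: \<epsilon>_def power2_eq_square power3_eq_cube)
  also have "\<dots> \<le> (a powr (r - 2) * a) * (a powr (r - 2) * tau^3)"
    using tau by (intro mult_right_mono mult_left_mono) auto
  also have "\<dots> = a powr (r - 1) * a powr (r - 2) * tau^3" by (simp add: p1)
  finally have t2: "\<epsilon>^2 \<le> a powr (r - 1) * a powr (r - 2) * tau^3" .
  have "(s powr r - (a + c1 * tau) powr r) * (s powr r - (a + c2 * tau) powr r)
          - (r * a powr (r - 1) * tau)^2 * (((s - a) / tau - c1) * ((s - a) / tau - c2))
        = (D * (th - c1) + (R s - R (a + c1 * tau))) * (D * (th - c2) + (R s - R (a + c2 * tau))) - D^2 * ((th - c1) * (th - c2))"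
    unfolding dec by (simp add: D_def th_def)
  then show ?thesis using main t1 t2 by linarith
qed

lemma P_integral_zero:
  fixes a tau c1 c2 :: real
  assumes tau: "0 < tau" and c: "1/3 - (c1 + c2) / 2 + c1 * c2 = 0"
  shows "((\<lambda>s. ((s - a) / tau - c1) * ((s - a) / tau - c2)) has_integral 0) {a..a+tau}"
proof -
  define A3 where "A3 = 1 / (3 * tau^2)"
  define B2 where "B2 = (c1 + c2) / (2 * tau)"
  define C where "C = c1 * c2"
  define F where "F s = A3 * (s - a)^3 - B2 * (s - a)^2 + C * (s - a)" for s
  have "((\<lambda>s. ((s - a) / tau - c1) * ((s - a) / tau - c2)) has_integral (F (a + tau) - F a)) {a..a+tau}"
  proof (rule fundamental_theorem_of_calculus)
    show "a \<le> a + tau" using tau by simp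
    fix x assume "x \<in> {a..a+tau}"
    have d: "(F has_real_derivative (A3 * (3 * (x - a)^2) - B2 * (2 * (x - a)) + C)) (at x within {a..a + tau})"
      unfolding F_def by (auto intro!: derivative_eq_intros)
    have e: "A3 * (3 * (x - a)^2) - B2 * (2 * (x - a)) + C
        = ((x - a) / tau - c1) * ((x - a) / tau - c2)"
      using tau by (simp add: A3_def B2_def C_def field_simps power2_eq_square)
    show "(F has_vector_derivative ((x - a) / tau - c1) * ((x - a) / tau - c2)) (at x within {a..a + tau})"
      using d unfolding e has_real_derivative_iff_has_vector_derivative .
  qed
  moreover have "F (a + tau) - F a = tau * (1/3 - (c1 + c2) / 2 + c1 * c2)"
    using tau by (simp add: F_def A3_def B2_def C_def field_simps power2_eq_square power3_eq_cube)
  moreover have "\<dots> = 0" using c by simp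
  ultimately show ?thesis by simp
qed


lemma spacing_upper:
  fixes a tau r s s' :: real
  assumes a: "0 < a" and tau: "0 < tau" and r: "0 < r" "r < 1"
    and s: "a \<le> s" "s \<le> a + tau" and s': "a \<le> s'" "s' \<le> a + tau"
  shows "\<bar>s powr r - s' powr r\<bar> \<le> r * a powr (r - 1) * tau"
proof -
  have m: "a powr r \<le> x powr r" "x powr r \<le> (a + tau) powr r" if "a \<le> x" "x \<le> a + tau" for x
    using that a r by (auto intro: powr_mono2)
  have "(a + tau) powr r - a powr r \<le> r * a powr (r - 1) * (a + tau - a)"
    by (rule powr_conc_upper) (use a tau r in auto)
  then have "(a + tau) powr r - a powr r \<le> r * a powr (r - 1) * tau" by simp
  then show ?thesis unfolding abs_le_iff using m[OF s] m[OF s'] by linarith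
qed

lemma spacing_lower:
  fixes a tau r c1 c2 :: real
  assumes a: "0 < a" and tau: "0 < tau" "tau \<le> a" and r: "0 < r" "r < 1"
    and c: "c1 \<in> {0..1}" "c2 \<in> {0..1}"
  shows "r * a powr (r - 1) * \<bar>c2 - c1\<bar> * tau / 2 \<le> \<bar>(a + c2 * tau) powr r - (a + c1 * tau) powr r\<bar>"
proof -
  have gen: "r * a powr (r - 1) * (d2 - d1) * tau / 2 \<le> (a + d2 * tau) powr r - (a + d1 * tau) powr r"
    if d: "0 \<le> d1" "d1 \<le> d2" "d2 \<le> 1" for d1 d2
  proof -
    have x0: "0 < a + d1 * tau" using a tau d by (simp add: add_pos_nonneg)
    have xy: "a + d1 * tau \<le> a + d2 * tau" using d tau by (simp add: mult_right_mono)
    have y1: "a + d2 * tau \<le> 2 * a" using d tau by (smt (verit) mult_left_le_one_le)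
    have low: "r * (a + d2 * tau) powr (r - 1) * ((a + d2 * tau) - (a + d1 * tau)) \<le> (a + d2 * tau) powr r - (a + d1 * tau) powr r"
      by (rule powr_conc_lower[OF x0 xy]) (use r in auto)
    have "(2 * a) powr (r - 1) \<le> (a + d2 * tau) powr (r - 1)"
      by (rule powr_mono2_neg) (use r x0 xy y1 in auto)
    moreover have "(2 * a) powr (r - 1) = 2 powr (r - 1) * a powr (r - 1)" using a by (simp add: powr_mult)
    moreover have "2 powr (-1) \<le> 2 powr (r - 1)" using r by (intro powr_mono) auto
    moreover have "2 powr (-1::real) = 1 / 2" by (simp add: powr_minus_divide)
    ultimately have h2: "1 / 2 \<le> 2 powr (r - 1)" "(2 * a) powr (r - 1) = 2 powr (r - 1) * a powr (r - 1)"
      "(2 * a) powr (r - 1) \<le> (a + d2 * tau) powr (r - 1)" by auto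
    have "(1 / 2) * a powr (r - 1) \<le> 2 powr (r - 1) * a powr (r - 1)"
      using h2(1) by (rule mult_right_mono) simp
    then have "a powr (r - 1) / 2 \<le> (a + d2 * tau) powr (r - 1)"
      using h2(2,3) by simp
    then have "r * (a powr (r - 1) / 2) * ((d2 - d1) * tau) \<le> r * (a + d2 * tau) powr (r - 1) * ((d2 - d1) * tau)"
      using r d tau by (intro mult_right_mono mult_left_mono) auto
    moreover have "(a + d2 * tau) - (a + d1 * tau) = (d2 - d1) * tau" by (simp add: algebra_simps)
    ultimately show ?thesis using low by (simp add: algebra_simps)
  qed
  show ?thesis
  proof (cases "c1 \<le> c2")
    case True
    have g: "r * a powr (r - 1) * (c2 - c1) * tau / 2 \<le> (a + c2 * tau) powr r - (a + c1 * tau) powr r"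
      using gen[of c1 c2] c True by auto
    show ?thesis using order.trans[OF g abs_ge_self] True by simp
  next
    case False
    have g: "r * a powr (r - 1) * (c1 - c2) * tau / 2 \<le> (a + c1 * tau) powr r - (a + c2 * tau) powr r"
      using gen[of c2 c1] c False by auto
    show ?thesis using order.trans[OF g abs_ge_self] False by (simp add: abs_minus_commute)
  qed
qed

lemma rho_bound:
  fixes a tau r c1 c2 s :: real
  assumes a: "0 < a" and tau: "0 < tau" "tau \<le> a" and r: "0 < r" "r < 1"
    and c: "c1 \<in> {0..1}" "c2 \<in> {0..1}" "c1 \<noteq> c2" and s: "a \<le> s" "s \<le> a + tau"
  shows "\<bar>s powr r - (a + c1 * tau) powr r\<bar> \<le> (2 / \<bar>c2 - c1\<bar>) * \<bar>(a + c2 * tau) powr r - (a + c1 * tau) powr r\<bar>"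
proof -
  have c1i: "a \<le> a + c1 * tau" "a + c1 * tau \<le> a + tau" using c tau by (auto simp: mult_left_le_one_le)
  have "\<bar>s powr r - (a + c1 * tau) powr r\<bar> \<le> r * a powr (r - 1) * tau"
    by (rule spacing_upper) (use a tau r s c1i in auto)
  also have "\<dots> = (2 / \<bar>c2 - c1\<bar>) * (r * a powr (r - 1) * \<bar>c2 - c1\<bar> * tau / 2)"
    using c by (simp add: field_simps)
  also have "\<dots> \<le> (2 / \<bar>c2 - c1\<bar>) * \<bar>(a + c2 * tau) powr r - (a + c1 * tau) powr r\<bar>"
    by (intro mult_left_mono spacing_lower) (use a tau r c in auto)
  finally show ?thesis .
qed

lemma rho_bound0:
  fixes tau r c1 c2 s :: real
  assumes tau: "0 < tau" and r: "0 < r" and c: "c1 \<in> {0..1}" "c2 \<in> {0..1}" "c1 \<noteq> c2"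
    and s: "0 \<le> s" "s \<le> tau"
  shows "\<bar>s powr r - (c1 * tau) powr r\<bar> \<le> (1 / \<bar>c2 powr r - c1 powr r\<bar>) * \<bar>(c2 * tau) powr r - (c1 * tau) powr r\<bar>"
    and "c2 powr r \<noteq> c1 powr r"
proof -
  show ne: "c2 powr r \<noteq> c1 powr r"
  proof
    assume "c2 powr r = c1 powr r"
    moreover have "c1 powr r < c2 powr r \<or> c2 powr r < c1 powr r"
      using c r by (cases "c1 < c2") (auto intro: powr_less_mono2)
    ultimately show False by simp
  qed
  have m: "0 \<le> x powr r \<and> x powr r \<le> tau powr r" if "0 \<le> x" "x \<le> tau" for x
    using that r by (auto intro: powr_mono2)
  have "c1 * tau \<le> tau" using c tau by (simp add: mult_left_le_one_le)
  then have A: "0 \<le> s powr r" "s powr r \<le> tau powr r" "0 \<le> (c1 * tau) powr r" "(c1 * tau) powr r \<le> tau powr r"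
    using m[OF s] m[of "c1 * tau"] c tau by auto
  then have "\<bar>s powr r - (c1 * tau) powr r\<bar> \<le> tau powr r"
    unfolding abs_le_iff by linarith
  also have "\<dots> = (1 / \<bar>c2 powr r - c1 powr r\<bar>) * \<bar>(c2 * tau) powr r - (c1 * tau) powr r\<bar>"
  proof -
    have "(c2 * tau) powr r - (c1 * tau) powr r = tau powr r * (c2 powr r - c1 powr r)"
      using c tau by (simp add: powr_mult algebra_simps)
    then show ?thesis using ne tau by (simp add: abs_mult)
  qed
  finally show "\<bar>s powr r - (c1 * tau) powr r\<bar> \<le> (1 / \<bar>c2 powr r - c1 powr r\<bar>) * \<bar>(c2 * tau) powr r - (c1 * tau) powr r\<bar>" .
qed


definition Eloc :: "(real \<Rightarrow> 'a::banach) \<Rightarrow> real \<Rightarrow> real \<Rightarrow> real \<Rightarrow> real \<Rightarrow> real \<Rightarrow> real \<Rightarrow> 'a" where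
  "Eloc h r c1 c2 tau a s = h (s powr r) - (alpha0 h r c1 c2 tau a + (s powr r) *\<^sub>R alpha1 h r c1 c2 tau a)"

lemma Eloc_cont:
  assumes hc: "continuous_on {0..} h" and r: "r > 0" and a: "a \<ge> 0"
  shows "continuous_on {a..b} (Eloc h r c1 c2 tau a)"
proof -
  have "continuous_on {a..b} (\<lambda>s. h (s powr r))"
    by (rule continuous_on_compose2[OF hc]) (use a in \<open>auto intro!: continuous_intros continuous_on_powr' simp: r\<close>)
  moreover have "continuous_on {a..b} (\<lambda>s. s powr r)"
    using a by (auto intro!: continuous_intros continuous_on_powr' simp: r)
  ultimately show ?thesis unfolding Eloc_def
    by (intro continuous_on_diff continuous_on_add continuous_on_scaleR continuous_on_const)
qed

lemma local_err0:
  fixes S :: "real \<Rightarrow> 'a::banach \<Rightarrow> 'a" and h h1 h2 :: "real \<Rightarrow> 'a"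
  assumes S: "c0_semigroup S" and M: "\<forall>t\<in>{0..L}. \<forall>x. norm (S t x) \<le> M * norm x" and M0: "M \<ge> 0"
    and tau: "0 < tau" "tau \<le> L" and r: "0 < r"
    and c: "c1 \<in> {0..1}" "c2 \<in> {0..1}" "c1 \<noteq> c2"
    and hc: "continuous_on {0..} h"
    and d1: "\<And>x. x \<ge> 0 \<Longrightarrow> (h has_vector_derivative h1 x) (at x within {0..})"
    and d2: "\<And>x. x \<ge> 0 \<Longrightarrow> (h1 has_vector_derivative h2 x) (at x within {0..})"
    and K2: "\<And>x. x \<ge> 0 \<Longrightarrow> norm (h2 x) \<le> K2"
  shows "norm (integral {0..0+tau} (\<lambda>s. S (0 + tau - s) (Eloc h r c1 c2 tau 0 s)))
         \<le> tau * (M * ((2 + 2 * (1 / \<bar>c2 powr r - c1 powr r\<bar>)) * (K2 * (tau powr r)^2)))"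
proof -
  define u1 where "u1 = (c1 * tau) powr r"
  define u2 where "u2 = (c2 * tau) powr r"
  define \<rho> where "\<rho> = 1 / \<bar>c2 powr r - c1 powr r\<bar>"
  have K20: "K2 \<ge> 0" using K2[of 0] norm_ge_zero order_trans by blast
  have ne: "c2 powr r \<noteq> c1 powr r" using rho_bound0(2)[OF tau(1) r c, of 0] tau by simp
  have u12: "u2 - u1 = tau powr r * (c2 powr r - c1 powr r)"
    using c tau by (simp add: u1_def u2_def powr_mult algebra_simps)
  have une: "u1 \<noteq> u2" using u12 ne tau by auto
  define g where "g x = h x - h 0 - (x - 0) *\<^sub>R h1 0 - ((x - 0)^2 / 2) *\<^sub>R (0::'a)" for x
  have gb: "norm (g x) \<le> K2 * (tau powr r)^2" if "x \<in> {0..0 + tau powr r}" for x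
    unfolding g_def using taylor1_bound[OF d1 d2 K2 _ that] by simp
  have rng: "x powr r \<in> {0..0 + tau powr r}" if "0 \<le> x" "x \<le> tau" for x
    using that r by (auto intro: powr_mono2)
  have Eb: "norm (Eloc h r c1 c2 tau 0 s) \<le> (2 + 2 * \<rho>) * (K2 * (tau powr r)^2)" if s: "s \<in> {0..tau}" for s
  proof -
    have "Eloc h r c1 c2 tau 0 s = ip h u1 u2 (s powr r)"
      unfolding Eloc_def u1_def u2_def using ip_alpha[of h "s powr r" r c1 c2 tau 0] by simp
    also have "\<dots> = ip g u1 u2 (s powr r)"
      using ip_quad[OF une, of h "s powr r" "h 0" 0 "h1 0" 0] by (simp add: g_def[abs_def])
    finally have e: "Eloc h r c1 c2 tau 0 s = ip g u1 u2 (s powr r)" .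
    have ci: "c1 * tau \<in> {0..tau}" "c2 * tau \<in> {0..tau}" using c tau by (auto simp: mult_left_le_one_le)
    show ?thesis unfolding e
    proof (rule ip_bound[OF une])
      show "norm (g (s powr r)) \<le> K2 * (tau powr r)^2" using s by (intro gb rng) auto
      show "norm (g u1) \<le> K2 * (tau powr r)^2" unfolding u1_def using ci by (intro gb rng) auto
      show "norm (g u2) \<le> K2 * (tau powr r)^2" unfolding u2_def using ci by (intro gb rng) auto
      show "\<bar>s powr r - u1\<bar> \<le> \<rho> * \<bar>u2 - u1\<bar>"
        unfolding u1_def u2_def \<rho>_def by (rule rho_bound0(1)[OF tau(1) r c]) (use s in auto)
    qed
  qed
  have cont: "continuous_on {0..0+tau} (\<lambda>s. S (0 + tau - s) (Eloc h r c1 c2 tau 0 s))"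
    by (rule c0_cont[OF S _ Eloc_cont[OF hc r], where L = tau]) (auto intro!: continuous_intros)
  define B where "B = M * ((2 + 2 * \<rho>) * (K2 * (tau powr r)^2))"
  have B0: "0 \<le> B" using M0 K20 by (simp add: \<rho>_def B_def)
  have hi: "((\<lambda>s. S (0 + tau - s) (Eloc h r c1 c2 tau 0 s)) has_integral integral {0..0+tau} (\<lambda>s. S (0 + tau - s) (Eloc h r c1 c2 tau 0 s))) (cbox 0 (0 + tau))"
    using integrable_continuous_real[OF cont] by (simp add: integrable_integral)
  have bnd: "norm (S (0 + tau - s) (Eloc h r c1 c2 tau 0 s)) \<le> B" if s: "s \<in> cbox 0 (0 + tau)" for s
  proof -
    have "norm (S (0 + tau - s) (Eloc h r c1 c2 tau 0 s)) \<le> M * norm (Eloc h r c1 c2 tau 0 s)"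
      using M s tau by auto
    also have "\<dots> \<le> B"
      unfolding B_def using Eb[of s] s M0 by (intro mult_left_mono) auto
    finally show ?thesis .
  qed
  have "norm (integral {0..0+tau} (\<lambda>s. S (0 + tau - s) (Eloc h r c1 c2 tau 0 s))) \<le> B * tau"
    using has_integral_bound[OF B0 hi bnd] tau by simp
  then show ?thesis using tau by (simp add: \<rho>_def B_def mult.commute)
qed


lemma local_err1:
  fixes S :: "real \<Rightarrow> 'a::banach \<Rightarrow> 'a" and h h1 h2 h3 :: "real \<Rightarrow> 'a"
  assumes gen: "generates A D S" and M: "\<forall>t\<in>{0..L}. \<forall>x. norm (S t x) \<le> M * norm x" and M0: "M \<ge> 0"
    and tau: "0 < tau" "tau < L" and a: "tau \<le> a" and r: "0 < r" "r < 1"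
    and c: "c1 \<in> {0..1}" "c2 \<in> {0..1}" "c1 \<noteq> c2" and cc: "1/3 - (c1 + c2) / 2 + c1 * c2 = 0"
    and hc: "continuous_on {0..} h"
    and d1: "\<And>x. x \<ge> 0 \<Longrightarrow> (h has_vector_derivative h1 x) (at x within {0..})"
    and d2: "\<And>x. x \<ge> 0 \<Longrightarrow> (h1 has_vector_derivative h2 x) (at x within {0..})"
    and d3: "\<And>x. x \<ge> 0 \<Longrightarrow> (h2 has_vector_derivative h3 x) (at x within {0..})"
    and K2: "\<And>x. x \<ge> 0 \<Longrightarrow> norm (h2 x) \<le> K2"
    and K3: "\<And>x. x \<ge> 0 \<Longrightarrow> norm (h3 x) \<le> K3"
    and KA: "\<And>x. x \<ge> 0 \<Longrightarrow> norm (A (h2 x)) \<le> KA"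
    and dom: "\<And>x. x \<ge> 0 \<Longrightarrow> h2 x \<in> D"
  shows "norm (integral {a..a+tau} (\<lambda>s. S (a + tau - s) (Eloc h r c1 c2 tau a s)))
         \<le> tau * (M * ((2 + 2 * (2 / \<bar>c2 - c1\<bar>)) * (K3 * (r * a powr (r - 1) * tau)^3))
                  + (r * a powr (r - 1) * tau)^2 / 2 * (M * KA * tau)
                  + K2 / 2 * (8 * (a powr (r - 1) * a powr (r - 2) * tau^3)))"
proof -
  have S: "c0_semigroup S" using gen by (simp add: generates_def)
  have a0: "0 < a" using a tau by simp
  define ua where "ua = a powr r"
  define u1 where "u1 = (a + c1 * tau) powr r"
  define u2 where "u2 = (a + c2 * tau) powr r"
  define \<Delta> where "\<Delta> = r * a powr (r - 1) * tau"
  define \<rho> where "\<rho> = 2 / \<bar>c2 - c1\<bar>"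
  define w where "w = h2 ua"
  define X where "X = a powr (r - 1) * a powr (r - 2) * tau^3"
  have ua0: "ua \<ge> 0" by (simp add: ua_def)
  have K20: "K2 \<ge> 0" using K2[of 0] norm_ge_zero order_trans by blast
  have K30: "K3 \<ge> 0" using K3[of 0] norm_ge_zero order_trans by blast
  have KA0: "KA \<ge> 0" using KA[of 0] norm_ge_zero order_trans by blast
  have D0: "\<Delta> \<ge> 0" using r tau by (simp add: \<Delta>_def)
  have rho0: "\<rho> \<ge> 0" by (simp add: \<rho>_def)
  have X0: "X \<ge> 0" using tau by (simp add: X_def)
  have une: "u1 \<noteq> u2"
  proof -
    have "0 < r * a powr (r - 1) * \<bar>c2 - c1\<bar> * tau / 2" using r a0 tau c by simp
    also have "\<dots> \<le> \<bar>u2 - u1\<bar>" unfolding u1_def u2_def by (rule spacing_lower) (use a0 tau a r c in auto)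
    finally show ?thesis by auto
  qed
  have ci: "a \<le> a + ci * tau" "a + ci * tau \<le> a + tau" if "ci \<in> {0..1}" for ci
    using that tau by (auto simp: mult_left_le_one_le)
  have rng: "x powr r \<in> {ua..ua + \<Delta>}" if "a \<le> x" "x \<le> a + tau" for x
  proof -
    have "ua \<le> x powr r" unfolding ua_def using that a0 r by (auto intro: powr_mono2)
    moreover have "x powr r \<le> (a + tau) powr r" using that a0 r by (auto intro: powr_mono2)
    moreover have "(a + tau) powr r - a powr r \<le> r * a powr (r - 1) * (a + tau - a)"
      by (rule powr_conc_upper) (use a0 tau r in auto)
    ultimately show ?thesis by (simp add: ua_def \<Delta>_def)
  qed
  define g where "g x = h x - h ua - (x - ua) *\<^sub>R h1 ua - ((x - ua)^2 / 2) *\<^sub>R h2 ua" for x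
  have gb: "norm (g x) \<le> K3 * \<Delta>^3" if "x \<in> {ua..ua + \<Delta>}" for x
    unfolding g_def by (rule taylor2_bound[OF d1 d2 d3 K3 ua0 that])
  define q where "q s = (s powr r - u1) * (s powr r - u2)" for s
  define P where "P s = \<Delta>^2 * (((s - a) / tau - c1) * ((s - a) / tau - c2))" for s
  have Edec: "Eloc h r c1 c2 tau a s = ip g u1 u2 (s powr r) + (q s / 2) *\<^sub>R w" for s
  proof -
    have "Eloc h r c1 c2 tau a s = ip h u1 u2 (s powr r)"
      unfolding Eloc_def u1_def u2_def by (rule ip_alpha)
    also have "\<dots> = ip g u1 u2 (s powr r) + (q s / 2) *\<^sub>R w"
      using ip_quad[OF une, of h "s powr r" "h ua" ua "h1 ua" "h2 ua"]
      by (simp add: g_def[abs_def] q_def w_def)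
    finally show ?thesis .
  qed
  have ipb: "norm (ip g u1 u2 (s powr r)) \<le> (2 + 2 * \<rho>) * (K3 * \<Delta>^3)" if s: "a \<le> s" "s \<le> a + tau" for s
  proof (rule ip_bound[OF une])
    show "norm (g (s powr r)) \<le> K3 * \<Delta>^3" using s by (intro gb rng) auto
    show "norm (g u1) \<le> K3 * \<Delta>^3" unfolding u1_def using ci[OF c(1)] by (intro gb rng) auto
    show "norm (g u2) \<le> K3 * \<Delta>^3" unfolding u2_def using ci[OF c(2)] by (intro gb rng) auto
    show "\<bar>s powr r - u1\<bar> \<le> \<rho> * \<bar>u2 - u1\<bar>"
      unfolding u1_def u2_def \<rho>_def by (rule rho_bound) (use a0 tau a r c s in auto)
  qed
  have qb: "\<bar>q s\<bar> \<le> \<Delta>^2" if s: "a \<le> s" "s \<le> a + tau" for s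
  proof -
    have "\<bar>s powr r - u1\<bar> \<le> \<Delta>" unfolding u1_def \<Delta>_def
      by (rule spacing_upper) (use a0 tau r s ci[OF c(1)] in auto)
    moreover have "\<bar>s powr r - u2\<bar> \<le> \<Delta>" unfolding u2_def \<Delta>_def
      by (rule spacing_upper) (use a0 tau r s ci[OF c(2)] in auto)
    ultimately show ?thesis unfolding q_def abs_mult power2_eq_square
      by (intro mult_mono) auto
  qed
  have qPb: "\<bar>q s - P s\<bar> \<le> 8 * X" if s: "a \<le> s" "s \<le> a + tau" for s
    unfolding q_def P_def u1_def u2_def \<Delta>_def X_def
    by (rule qP_bound) (use a0 tau a r c s in auto)
  have Sw: "norm (S \<sigma> w - w) \<le> M * KA * tau" if "0 \<le> \<sigma>" "\<sigma> \<le> tau" for \<sigma>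
  proof -
    have "norm (S \<sigma> w - w) \<le> M * norm (A w) * \<sigma>"
      unfolding w_def by (rule gen_bound[OF gen M dom[OF ua0]]) (use that tau in auto)
    also have "\<dots> \<le> M * KA * tau"
      using that M0 KA[OF ua0] KA0 by (intro mult_mono) (auto simp: w_def intro: mult_left_mono)
    finally show ?thesis .
  qed
  define F where "F s = S (a + tau - s) (Eloc h r c1 c2 tau a s) - (P s / 2) *\<^sub>R w" for s
  define Bnd where "Bnd = M * ((2 + 2 * \<rho>) * (K3 * \<Delta>^3)) + \<Delta>^2 / 2 * (M * KA * tau) + K2 / 2 * (8 * X)"
  have Fb: "norm (F s) \<le> Bnd" if s: "s \<in> cbox a (a + tau)" for s
  proof -
    have s': "a \<le> s" "s \<le> a + tau" using s by auto
    have bl: "bounded_linear (S (a + tau - s))" using S s' by (simp add: c0_semigroup_def)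
    have Feq: "F s = S (a + tau - s) (ip g u1 u2 (s powr r)) + (q s / 2) *\<^sub>R (S (a + tau - s) w - w)
                + ((q s - P s) / 2) *\<^sub>R w"
      unfolding F_def Edec using bl by (simp add: linear_simps algebra_simps diff_divide_distrib scaleR_diff_left)
    moreover have "norm (S (a + tau - s) (ip g u1 u2 (s powr r))) \<le> M * ((2 + 2 * \<rho>) * (K3 * \<Delta>^3))"
    proof -
      have "norm (S (a + tau - s) (ip g u1 u2 (s powr r))) \<le> M * norm (ip g u1 u2 (s powr r))"
        using M s' tau by auto
      also have "\<dots> \<le> M * ((2 + 2 * \<rho>) * (K3 * \<Delta>^3))" using ipb[OF s'] M0 by (rule mult_left_mono)
      finally show ?thesis .
    qed
    moreover have "norm ((q s / 2) *\<^sub>R (S (a + tau - s) w - w)) \<le> \<Delta>^2 / 2 * (M * KA * tau)"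
    proof -
      have "norm ((q s / 2) *\<^sub>R (S (a + tau - s) w - w)) = (\<bar>q s\<bar> / 2) * norm (S (a + tau - s) w - w)" by simp
      also have "\<dots> \<le> (\<Delta>^2 / 2) * (M * KA * tau)"
        using qb[OF s'] Sw[of "a + tau - s"] s' by (intro mult_mono) auto
      finally show ?thesis .
    qed
    moreover have "norm (((q s - P s) / 2) *\<^sub>R w) \<le> K2 / 2 * (8 * X)"
    proof -
      have "norm (((q s - P s) / 2) *\<^sub>R w) = (\<bar>q s - P s\<bar> / 2) * norm w" by simp
      also have "\<dots> \<le> (8 * X / 2) * K2"
        using qPb[OF s'] K2[OF ua0] by (intro mult_mono) (auto simp: w_def)
      also have "\<dots> = K2 / 2 * (8 * X)" by simp
      finally show ?thesis .
    qed
    ultimately show ?thesis unfolding Bnd_def Feq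
      using norm_triangle_ineq[of "S (a + tau - s) (ip g u1 u2 (s powr r)) + (q s / 2) *\<^sub>R (S (a + tau - s) w - w)" "((q s - P s) / 2) *\<^sub>R w"]
        norm_triangle_ineq[of "S (a + tau - s) (ip g u1 u2 (s powr r))" "(q s / 2) *\<^sub>R (S (a + tau - s) w - w)"]
      by linarith
  qed
  have cont: "continuous_on {a..a+tau} (\<lambda>s. S (a + tau - s) (Eloc h r c1 c2 tau a s))"
    by (rule c0_cont[OF S _ Eloc_cont[OF hc r(1)], where L = tau]) (use a0 in \<open>auto intro!: continuous_intros\<close>)
  define I where "I = integral {a..a+tau} (\<lambda>s. S (a + tau - s) (Eloc h r c1 c2 tau a s))"
  have hI: "((\<lambda>s. S (a + tau - s) (Eloc h r c1 c2 tau a s)) has_integral I) {a..a+tau}"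
    unfolding I_def using integrable_continuous_real[OF cont] by (simp add: integrable_integral)
  have hP: "((\<lambda>s. (P s / 2) *\<^sub>R w) has_integral 0) {a..a+tau}"
  proof -
    have "((\<lambda>s. ((s - a) / tau - c1) * ((s - a) / tau - c2)) has_integral 0) {a..a+tau}"
      by (rule P_integral_zero[OF tau(1) cc])
    from has_integral_mult_left[OF this, of "\<Delta>^2 / 2"]
    have "((\<lambda>s. P s / 2) has_integral 0) {a..a+tau}" by (simp add: P_def mult.commute)
    from has_integral_scaleR_left[OF this, of w] show ?thesis by simp
  qed
  have hF: "(F has_integral I) (cbox a (a + tau))"
    using has_integral_diff[OF hI hP] unfolding F_def by simp
  have Bnd0: "0 \<le> Bnd" unfolding Bnd_def using M0 rho0 K30 D0 KA0 tau K20 X0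
    by (intro add_nonneg_nonneg mult_nonneg_nonneg) auto
  have "norm I \<le> Bnd * tau" using has_integral_bound[OF Bnd0 hF Fb] tau by simp
  then show ?thesis unfolding I_def Bnd_def \<rho>_def \<Delta>_def X_def by (simp add: mult.commute)
qed


lemma err_step:
  fixes S :: "real \<Rightarrow> 'a::banach \<Rightarrow> 'a"
  assumes S: "c0_semigroup S" and a: "a \<ge> 0" and tau: "tau > 0" and r: "r > 0"
    and hc: "continuous_on {0..} h"
  shows "mild_sol S h r y0 (a + tau) - (S tau Y + tau *\<^sub>R phi S 1 tau (alpha0 h r c1 c2 tau a)
           + Gamma (1 + r) *\<^sub>R
             (((a + tau) powr (1 + r)) *\<^sub>R phi S (1 + r) (a + tau) (alpha1 h r c1 c2 tau a)
              - (a powr (1 + r)) *\<^sub>R S tau (phi S (1 + r) a (alpha1 h r c1 c2 tau a))))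
       = S tau (mild_sol S h r y0 a - Y) + integral {a..a+tau} (\<lambda>s. S (a + tau - s) (Eloc h r c1 c2 tau a s))"
proof -
  define a0 where "a0 = alpha0 h r c1 c2 tau a"
  define a1 where "a1 = alpha1 h r c1 c2 tau a"
  have hr: "continuous_on {a..a+tau} (\<lambda>s. h (s powr r))"
    by (rule continuous_on_compose2[OF hc]) (use a in \<open>auto intro!: continuous_intros continuous_on_powr' simp: r\<close>)
  have pr: "continuous_on {a..a+tau} (\<lambda>s. a0 + (s powr r) *\<^sub>R a1)"
    using a by (auto intro!: continuous_intros continuous_on_powr' simp: r)
  have c1: "continuous_on {a..a+tau} (\<lambda>s. S (a + tau - s) (h (s powr r)))"
    by (rule c0_cont[OF S _ hr, where L = tau]) (auto intro!: continuous_intros)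
  have c2: "continuous_on {a..a+tau} (\<lambda>s. S (a + tau - s) (a0 + (s powr r) *\<^sub>R a1))"
    by (rule c0_cont[OF S _ pr, where L = tau]) (auto intro!: continuous_intros)
  have int: "integral {a..a+tau} (\<lambda>s. S (a + tau - s) (h (s powr r))) - integral {a..a+tau} (\<lambda>s. S (a + tau - s) (a0 + (s powr r) *\<^sub>R a1))
      = integral {a..a+tau} (\<lambda>s. S (a + tau - s) (Eloc h r c1 c2 tau a s))"
  proof -
    have "integral {a..a+tau} (\<lambda>s. S (a + tau - s) (h (s powr r))) - integral {a..a+tau} (\<lambda>s. S (a + tau - s) (a0 + (s powr r) *\<^sub>R a1))
        = integral {a..a+tau} (\<lambda>s. S (a + tau - s) (h (s powr r)) - S (a + tau - s) (a0 + (s powr r) *\<^sub>R a1))"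
      by (rule integral_diff[symmetric]) (auto intro: integrable_continuous_real c1 c2)
    also have "\<dots> = integral {a..a+tau} (\<lambda>s. S (a + tau - s) (Eloc h r c1 c2 tau a s))"
    proof (rule integral_cong)
      fix s assume "s \<in> {a..a+tau}"
      then have "bounded_linear (S (a + tau - s))" using S by (simp add: c0_semigroup_def)
      then show "S (a + tau - s) (h (s powr r)) - S (a + tau - s) (a0 + (s powr r) *\<^sub>R a1) = S (a + tau - s) (Eloc h r c1 c2 tau a s)"
        unfolding Eloc_def a0_def a1_def by (simp add: linear_simps)
    qed
    finally show ?thesis .
  qed
  have bl: "bounded_linear (S tau)" using S tau by (simp add: c0_semigroup_def)
  show ?thesis
    unfolding mild_step[OF S a tau r hc, of y0] a0_def[symmetric] a1_def[symmetric]
    using scheme_integral[OF S a tau r, of a0 a1] int bl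
    by (simp add: linear_simps algebra_simps)
qed

lemma err_sum:
  fixes S :: "real \<Rightarrow> 'a::banach \<Rightarrow> 'a"
  assumes S: "c0_semigroup S" and tau: "tau \<ge> 0" and e0: "e 0 = 0"
    and es: "\<And>m. e (Suc m) = S tau (e m) + d m"
  shows "e n = (\<Sum>k<n. S (real (n - 1 - k) * tau) (d k))"
proof (induction n)
  case 0 then show ?case using e0 by simp
next
  case (Suc n)
  have bl: "bounded_linear (S tau)" using S tau by (simp add: c0_semigroup_def)
  have "e (Suc n) = S tau (\<Sum>k<n. S (real (n - 1 - k) * tau) (d k)) + d n" using es Suc by simp
  also have "\<dots> = (\<Sum>k<n. S tau (S (real (n - 1 - k) * tau) (d k))) + d n"
    using bl by (simp add: linear_sum[OF bounded_linear.linear[OF bl]])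
  also have "\<dots> = (\<Sum>k<n. S (real (Suc n - 1 - k) * tau) (d k)) + S (real (Suc n - 1 - n) * tau) (d n)"
  proof -
    have "S tau (S (real (n - 1 - k) * tau) (d k)) = S (real (Suc n - 1 - k) * tau) (d k)" if "k < n" for k
    proof -
      have "real (Suc n - 1 - k) * tau = tau + real (n - 1 - k) * tau" using that by (simp add: of_nat_diff algebra_simps)
      then show ?thesis using c0_add[OF S, of tau "real (n - 1 - k) * tau" "d k"] tau by simp
    qed
    moreover have "S (real (Suc n - 1 - n) * tau) (d n) = d n" using c0_zero[OF S] by simp
    ultimately show ?thesis by simp
  qed
  also have "\<dots> = (\<Sum>k<Suc n. S (real (Suc n - 1 - k) * tau) (d k))" by simp
  finally show ?case .
qed


lemma powr_add_eq: "x + y = z \<Longrightarrow> a powr x * a powr y = a powr z" for a x y z :: real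
  by (metis powr_add)

lemma conv1:
  fixes a tau T r M rho K2 K3 KA :: real
  assumes tau: "0 < tau" "tau \<le> a" "a \<le> T" and r: "0 < r" "r < 1"
    and nn: "M \<ge> 0" "rho \<ge> 0" "K2 \<ge> 0" "K3 \<ge> 0" "KA \<ge> 0"
  shows "tau * (M * ((2 + 2 * rho) * (K3 * (r * a powr (r - 1) * tau)^3))
                  + (r * a powr (r - 1) * tau)^2 / 2 * (M * KA * tau)
                  + K2 / 2 * (8 * (a powr (r - 1) * a powr (r - 2) * tau^3)))
         \<le> (M * (2 + 2 * rho) * K3 * T powr r + M * KA * T / 2 + 4 * K2) * (tau^4 * a powr (2 * r - 3))"
proof -
  have a0: "a > 0" using tau by simp
  define p where "p = a powr (r - 1)"
  define Y where "Y = a powr (2 * r - 3)"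
  have p0: "p \<ge> 0" by (simp add: p_def)
  have Y0: "Y \<ge> 0" by (simp add: Y_def)
  have f1: "a powr (r - 1) * a powr (r - 2) = Y" unfolding Y_def by (rule powr_add_eq) simp
  have f2: "p * p = Y * a"
  proof -
    have "p * p = a powr (2 * r - 2)" unfolding p_def by (rule powr_add_eq) simp
    also have "\<dots> = Y * a powr 1" unfolding Y_def by (rule powr_add_eq[symmetric]) simp
    finally show ?thesis using a0 by simp
  qed
  have f3: "p * p * p = Y * a powr r"
  proof -
    have pp: "p * p = a powr (2 * r - 2)" unfolding p_def by (rule powr_add_eq) simp
    have "p * p * p = a powr (2 * r - 2) * a powr (r - 1)" using pp by (simp add: p_def[symmetric])
    also have "\<dots> = a powr (3 * r - 3)" by (rule powr_add_eq) simp
    also have "\<dots> = Y * a powr r" unfolding Y_def by (rule powr_add_eq[symmetric]) simp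
    finally show ?thesis .
  qed
  have ar: "a powr r \<le> T powr r" using tau r a0 by (intro powr_mono2) auto
  have r3: "r^3 \<le> 1" using r by (simp add: power_le_one)
  have r2: "r^2 \<le> 1" using r by (simp add: power_le_one)
  have t1: "tau * (M * ((2 + 2 * rho) * (K3 * (r * p * tau)^3))) \<le> (M * (2 + 2 * rho) * K3 * T powr r) * (tau^4 * Y)"
  proof -
    have e: "(r * p * tau)^3 = r^3 * (p * p * p) * tau^3" by (simp add: power3_eq_cube mult_ac)
    have "tau * (M * ((2 + 2 * rho) * (K3 * (r * p * tau)^3))) = (M * (2 + 2 * rho) * K3) * (r^3 * a powr r) * (tau^4 * Y)"
      unfolding e f3 by (simp add: eval_nat_numeral mult_ac)
    also have "\<dots> \<le> (M * (2 + 2 * rho) * K3) * (1 * T powr r) * (tau^4 * Y)"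
      using nn tau Y0 r3 ar by (intro mult_right_mono mult_left_mono mult_mono) auto
    finally show ?thesis by simp
  qed
  have t2: "tau * ((r * p * tau)^2 / 2 * (M * KA * tau)) \<le> (M * KA * T / 2) * (tau^4 * Y)"
  proof -
    have e: "(r * p * tau)^2 = r^2 * (p * p) * tau^2" by (simp add: power2_eq_square mult_ac)
    have "tau * ((r * p * tau)^2 / 2 * (M * KA * tau)) = ((M * KA) * (r^2 * a) * (tau^4 * Y)) / 2"
      unfolding e f2 by (simp add: eval_nat_numeral mult_ac)
    also have "\<dots> \<le> ((M * KA) * (1 * T) * (tau^4 * Y)) / 2"
      using nn tau Y0 r2 a0 by (intro divide_right_mono mult_right_mono mult_left_mono mult_mono) auto
    finally show ?thesis by simp
  qed
  have t3: "tau * (K2 / 2 * (8 * (a powr (r - 1) * a powr (r - 2) * tau^3))) = 4 * K2 * (tau^4 * Y)"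
    unfolding f1 by (simp add: eval_nat_numeral mult_ac)
  have "tau * (M * ((2 + 2 * rho) * (K3 * (r * p * tau)^3)) + (r * p * tau)^2 / 2 * (M * KA * tau)
          + K2 / 2 * (8 * (a powr (r - 1) * a powr (r - 2) * tau^3)))
       = tau * (M * ((2 + 2 * rho) * (K3 * (r * p * tau)^3))) + tau * ((r * p * tau)^2 / 2 * (M * KA * tau))
          + tau * (K2 / 2 * (8 * (a powr (r - 1) * a powr (r - 2) * tau^3)))"
    by (simp add: algebra_simps)
  also have "\<dots> \<le> (M * (2 + 2 * rho) * K3 * T powr r) * (tau^4 * Y) + (M * KA * T / 2) * (tau^4 * Y) + 4 * K2 * (tau^4 * Y)"
    using t1 t2 t3 by linarith
  also have "\<dots> = (M * (2 + 2 * rho) * K3 * T powr r + M * KA * T / 2 + 4 * K2) * (tau^4 * Y)"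
    by (simp add: algebra_simps)
  finally show ?thesis unfolding p_def Y_def .
qed

lemma conv2:
  fixes tau k r :: real
  assumes "tau > 0" "k > 0"
  shows "tau^4 * (k * tau) powr (2 * r - 3) = tau powr (1 + 2 * r) * k powr (2 * r - 3)"
proof -
  have "(k * tau) powr (2 * r - 3) = k powr (2 * r - 3) * tau powr (2 * r - 3)" using assms by (simp add: powr_mult)
  moreover have "tau^4 * tau powr (2 * r - 3) = tau powr (1 + 2 * r)"
  proof -
    have "tau^4 = tau powr 4" using powr_realpow[of tau 4] assms by simp
    moreover have "tau powr 4 * tau powr (2 * r - 3) = tau powr (1 + 2 * r)" by (rule powr_add_eq) simp
    ultimately show ?thesis by simp
  qed
  ultimately show ?thesis by (simp add: algebra_simps)
qed

lemma conv0:
  fixes tau r :: real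
  assumes "tau > 0"
  shows "tau * (tau powr r)^2 = tau powr (1 + 2 * r)"
proof -
  have "tau powr r * tau powr r = tau powr (2 * r)" by (rule powr_add_eq) simp
  then have "(tau powr r)^2 = tau powr (2 * r)" by (simp add: power2_eq_square)
  moreover have "tau * tau powr (2 * r) = tau powr (1 + 2 * r)"
    using assms powr_add_eq[of 1 "2 * r" "1 + 2 * r" tau] by simp
  ultimately show ?thesis by simp
qed


theorem theorem3:
  fixes A :: "'a::banach \<Rightarrow> 'a" and D :: "'a set" and S :: "real \<Rightarrow> 'a \<Rightarrow> 'a"
    and h h1 h2 h3 :: "real \<Rightarrow> 'a" and y0 :: 'a and T r c1 c2 :: real
  assumes gen: "generates A D S"
    and T: "T > 0" and r: "0 < r" "r < 1"
    and c: "c1 \<in> {0..1}" "c2 \<in> {0..1}" "c1 \<noteq> c2"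
           "1/3 - (c1 + c2) / 2 + c1 * c2 = 0"
    and d1: "\<And>x. x \<ge> 0 \<Longrightarrow> (h has_vector_derivative h1 x) (at x within {0..})"
    and d2: "\<And>x. x \<ge> 0 \<Longrightarrow> (h1 has_vector_derivative h2 x) (at x within {0..})"
    and d3: "\<And>x. x \<ge> 0 \<Longrightarrow> (h2 has_vector_derivative h3 x) (at x within {0..})"
    and b: "bounded (h1 ` {0..})" "bounded (h2 ` {0..})" "bounded (h3 ` {0..})"
    and dom: "\<And>x. x \<ge> 0 \<Longrightarrow> h2 x \<in> D"
    and bA: "bounded ((\<lambda>x. A (h2 x)) ` {0..})"
  shows "\<exists>C. \<forall>N::nat. N \<ge> 1 \<longrightarrow> (\<forall>n\<le>N.
           norm (mild_sol S h r y0 (real n * (T / real N))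
                 - eqrf2 S h r c1 c2 (T / real N) y0 n)
           \<le> C * (T / real N) powr (1 + 2 * r))"
proof -
  have S: "c0_semigroup S" using gen by (simp add: generates_def)
  have hc: "continuous_on {0..} h"
  proof (rule continuous_on_eq_continuous_within[THEN iffD2], intro ballI)
    fix x :: real assume "x \<in> {0..}"
    then show "continuous (at x within {0..}) h"
      using has_vector_derivative_continuous[OF d1[of x]] by auto
  qed
  obtain K2 where K2: "\<And>x. x \<ge> 0 \<Longrightarrow> norm (h2 x) \<le> K2" using b(2) unfolding bounded_iff by auto
  obtain K3 where K3: "\<And>x. x \<ge> 0 \<Longrightarrow> norm (h3 x) \<le> K3" using b(3) unfolding bounded_iff by auto
  obtain KA where KA: "\<And>x. x \<ge> 0 \<Longrightarrow> norm (A (h2 x)) \<le> KA" using bA unfolding bounded_iff by auto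
  have K20: "K2 \<ge> 0" using K2[of 0] norm_ge_zero order_trans by blast
  have K30: "K3 \<ge> 0" using K3[of 0] norm_ge_zero order_trans by blast
  have KA0: "KA \<ge> 0" using KA[of 0] norm_ge_zero order_trans by blast
  define L where "L = 2 * T + 2"
  obtain M where M0: "M > 0" and M: "\<forall>t\<in>{0..L}. \<forall>x. norm (S t x) \<le> M * norm x"
    using c0_unif_bound[OF S, of L] T by (auto simp: L_def)
  define \<rho>0 where "\<rho>0 = 1 / \<bar>c2 powr r - c1 powr r\<bar>"
  define \<rho>1 where "\<rho>1 = 2 / \<bar>c2 - c1\<bar>"
  define C0 where "C0 = M * (2 + 2 * \<rho>0) * K2"
  define C1 where "C1 = M * (2 + 2 * \<rho>1) * K3 * T powr r + M * KA * T / 2 + 4 * K2"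
  define Z where "Z = suminf (\<lambda>k. real k powr (2 * r - 3))"
  have summ: "summable (\<lambda>k. real k powr (2 * r - 3))" using summable_real_powr_iff r by simp
  have Zb: "(\<Sum>k<n. real k powr (2 * r - 3)) \<le> Z" for n
    unfolding Z_def by (rule sum_le_suminf[OF summ]) auto
  have C00: "C0 \<ge> 0" using M0 K20 by (simp add: C0_def \<rho>0_def)
  have C10: "C1 \<ge> 0" using M0 K20 K30 KA0 T by (simp add: C1_def \<rho>1_def)
  show ?thesis
  proof (rule exI[of _ "M * (C0 + C1 * Z)"], intro allI impI)
    fix N :: nat and n :: nat assume N: "N \<ge> 1" and n: "n \<le> N"
    define tau where "tau = T / real N"
    have tau0: "tau > 0" using T N by (simp add: tau_def)
    have NT: "real N * tau = T" using N by (simp add: tau_def)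
    have tauT: "tau \<le> T" using N T by (simp add: tau_def divide_le_eq_1 field_simps)
    have tauL: "tau < L" using tauT T by (simp add: L_def)
    define e where "e m = mild_sol S h r y0 (real m * tau) - eqrf2 S h r c1 c2 tau y0 m" for m
    define d where "d m = integral {real m * tau..real m * tau + tau} (\<lambda>s. S (real m * tau + tau - s) (Eloc h r c1 c2 tau (real m * tau) s))" for m
    have e0: "e 0 = 0" by (simp add: e_def mild_sol_def c0_zero[OF S])
    have es: "e (Suc m) = S tau (e m) + d m" for m
    proof -
      have "real (Suc m) * tau = real m * tau + tau" by (simp add: algebra_simps)
      then show ?thesis unfolding e_def d_def
        using err_step[OF S _ tau0 r(1) hc, of "real m * tau" y0 "eqrf2 S h r c1 c2 tau y0 m" c1 c2] tau0
        by (simp add: Let_def)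
    qed
    have en: "e n = (\<Sum>k<n. S (real (n - 1 - k) * tau) (d k))"
      by (rule err_sum[OF S _ e0 es]) (use tau0 in simp)
    have dk: "norm (d k) \<le> tau powr (1 + 2 * r) * (if k = 0 then C0 else C1 * real k powr (2 * r - 3))"
      if k: "k < N" for k
    proof (cases "k = 0")
      case True
      have "norm (d 0) \<le> tau * (M * ((2 + 2 * \<rho>0) * (K2 * (tau powr r)^2)))"
        using local_err0[OF S M _ tau0 _ r(1) c(1-3) hc d1 d2 K2] M0 tauL unfolding d_def \<rho>0_def by simp
      also have "\<dots> = C0 * (tau * (tau powr r)^2)" by (simp add: C0_def algebra_simps)
      also have "\<dots> = C0 * tau powr (1 + 2 * r)" by (simp add: conv0[OF tau0])
      finally show ?thesis using True by (simp add: mult.commute)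
    next
      case False
      define a where "a = real k * tau"
      have ka: "tau \<le> a" using False tau0 by (simp add: a_def)
      have aT: "a \<le> T"
      proof -
        have "real k \<le> real N" using k by simp
        then have "real k * tau \<le> real N * tau" using tau0 by (intro mult_right_mono) auto
        then show ?thesis using NT by (simp add: a_def)
      qed
      have "norm (d k) \<le> tau * (M * ((2 + 2 * (2 / \<bar>c2 - c1\<bar>)) * (K3 * (r * a powr (r - 1) * tau)^3))
                  + (r * a powr (r - 1) * tau)^2 / 2 * (M * KA * tau)
                  + K2 / 2 * (8 * (a powr (r - 1) * a powr (r - 2) * tau^3)))"
        unfolding d_def a_def[symmetric]
        by (rule local_err1[OF gen M _ tau0 tauL ka r c hc d1 d2 d3 K2 K3 KA dom]) (use M0 in simp)
      also have "\<dots> \<le> C1 * (tau^4 * a powr (2 * r - 3))"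
        unfolding C1_def \<rho>1_def using M0 K20 K30 KA0
        by (intro conv1) (use tau0 ka aT r in auto)
      also have "\<dots> = C1 * (tau powr (1 + 2 * r) * real k powr (2 * r - 3))"
        unfolding a_def using conv2[OF tau0, of "real k" r] False by (simp add: mult.commute)
      finally show ?thesis using False by (simp add: algebra_simps)
    qed
    have "norm (e n) \<le> (\<Sum>k<n. norm (S (real (n - 1 - k) * tau) (d k)))"
      unfolding en by (rule norm_sum)
    also have "\<dots> \<le> (\<Sum>k<n. M * (tau powr (1 + 2 * r) * (if k = 0 then C0 else C1 * real k powr (2 * r - 3))))"
    proof (rule sum_mono)
      fix k assume "k \<in> {..<n}"
      then have kN: "k < N" using n by auto
      have "real (n - 1 - k) * tau \<le> real N * tau" using tau0 n by (intro mult_right_mono) auto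
      then have "real (n - 1 - k) * tau \<in> {0..L}" using NT tau0 T by (auto simp: L_def)
      then have "norm (S (real (n - 1 - k) * tau) (d k)) \<le> M * norm (d k)" using M by blast
      also have "\<dots> \<le> M * (tau powr (1 + 2 * r) * (if k = 0 then C0 else C1 * real k powr (2 * r - 3)))"
        using dk[OF kN] M0 by (intro mult_left_mono) auto
      finally show "norm (S (real (n - 1 - k) * tau) (d k)) \<le> M * (tau powr (1 + 2 * r) * (if k = 0 then C0 else C1 * real k powr (2 * r - 3)))" .
    qed
    also have "\<dots> = M * tau powr (1 + 2 * r) * (\<Sum>k<n. (if k = 0 then C0 else C1 * real k powr (2 * r - 3)))"
      by (simp add: sum_distrib_left mult.assoc)
    also have "\<dots> \<le> M * tau powr (1 + 2 * r) * (C0 + C1 * Z)"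
    proof (rule mult_left_mono)
      have "(\<Sum>k<n. (if k = 0 then C0 else C1 * real k powr (2 * r - 3)))
          \<le> (\<Sum>k<n. (if k = 0 then C0 else 0) + C1 * real k powr (2 * r - 3))"
        by (rule sum_mono) (use C10 in auto)
      also have "\<dots> = (\<Sum>k<n. (if k = 0 then C0 else 0)) + C1 * (\<Sum>k<n. real k powr (2 * r - 3))"
        by (simp add: sum.distrib sum_distrib_left)
      also have "\<dots> \<le> C0 + C1 * Z"
      proof -
        have "(\<Sum>k<n. (if k = 0 then C0 else 0)) \<le> C0" using C00 by (simp add: sum.delta)
        moreover have "C1 * (\<Sum>k<n. real k powr (2 * r - 3)) \<le> C1 * Z" using Zb C10 by (intro mult_left_mono)
        ultimately show ?thesis by simp
      qed
      finally show "(\<Sum>k<n. (if k = 0 then C0 else C1 * real k powr (2 * r - 3))) \<le> C0 + C1 * Z" .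
      show "0 \<le> M * tau powr (1 + 2 * r)" using M0 by simp
    qed
    also have "\<dots> = M * (C0 + C1 * Z) * tau powr (1 + 2 * r)" by (simp add: mult_ac)
    finally show "norm (mild_sol S h r y0 (real n * (T / real N)) - eqrf2 S h r c1 c2 (T / real N) y0 n)
           \<le> M * (C0 + C1 * Z) * (T / real N) powr (1 + 2 * r)"
      unfolding e_def tau_def .
  qed
qed


end
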